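(* Assume the setting below, let $\lambda\in\mathbb C\setminus\sigma_{\mathrm{ess}}(\mathcal L)$, and suppose $\|\mathbf R(x)\|_{\mathbb C^{4\times4}}\le C_Re^{-a_R|x|}$ for all $x$, with $C_R,a_R>0$. Then $$\|\mathbf K(x,y;\lambda)\|_{\mathbb C^{4\times4}}\le\begin{cases}\sqrt2\operatorname{cond}(\mathbf P(\lambda))\,C_R\,e^{-a_R(|x|+|y|)/2}e^{-\kappa_1(x-y)},&x\ge y,\\ \sqrt2\operatorname{cond}(\mathbf P(\lambda))\,C_R\,e^{-a_R(|x|+|y|)/2}e^{\kappa_1(x-y)},&x\le y.\end{cases}$$ Consequently there is $C_R(\lambda)$ such that for all $i,j$ and all $(x,y)\in\mathbb R^2$, $|K_{ij}(x,y;\lambda)|\le C_R(\lambda)e^{-a_R(|x|+|y|)/2}$ and $|K_{ij}(x,y;\lambda)|\le C_R(\lambda)e^{-\kappa_1|x-y|}$.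
   Context: Setting. Real parameters $D,\beta,\delta,\alpha,\epsilon,\gamma,\mu,\nu$ with $\beta\ge0$, $(D,\beta)\neq(0,0)$; $\mathbf B=\begin{bmatrix}\beta&-D/2\\ D/2&\beta\end{bmatrix}$, $\mathbf N_0=\begin{bmatrix}\delta&-\alpha\\ \alpha&\delta\end{bmatrix}$, $\mathbf N_1=\begin{bmatrix}\epsilon&-\gamma\\ \gamma&\epsilon\end{bmatrix}$, $\mathbf N_2=\begin{bmatrix}\mu&-\nu\\ \nu&\mu\end{bmatrix}$; $\psi$ a stationary pulse of the cubic–quintic CGLE $i\Psi_t+\frac D2\Psi_{xx}+\gamma|\Psi|^2\Psi+\nu|\Psi|^4\Psi=i\delta\Psi+i\epsilon|\Psi|^2\Psi+i\beta\Psi_{xx}+i\mu|\Psi|^4\Psi$ ($\Psi=e^{-i\alpha t}\psi(x)$), $\boldsymbol\psi=[\operatorname{Re}\psi\ \operatorname{Im}\psi]^T$; $\mathbf M=\mathbf N_1|\boldsymbol\psi|^2+\mathbf N_2|\boldsymbol\psi|^4+(2\mathbf N_1+4\mathbf N_2|\boldsymbol\psi|^2)\boldsymbol\psi\boldsymbol\psi^T$; $\mathcal L=\mathbf B\partial_x^2+\mathbf N_0+\mathbf M$, $\sigma_{\mathrm{ess}}(\mathcal L)=\{(\delta\pm i\alpha)-s^2(\beta\pm iD/2):s\in\mathbb R\}$. $\mathbf R=\begin{bmatrix}\mathbf 0&\mathbf 0\\ -\mathbf B^{-1}\mathbf M&\mathbf 0\end{bmatrix}$; with polar decomposition $\mathbf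 M=\mathbf V|\mathbf M|$, $\mathbf R_\ell=\begin{bmatrix}\mathbf 0&\mathbf 0\\ -\mathbf B^{-1}\mathbf V|\mathbf M|^{1/2}&\mathbf 0\end{bmatrix}$, $\mathbf R_r=\begin{bmatrix}|\mathbf M|^{1/2}&\mathbf 0\\ \mathbf 0&\mathbf 0\end{bmatrix}$. $\mathbf A_\infty(\lambda)=\begin{bmatrix}\mathbf 0&\mathbf I\\ \mathbf B^{-1}(\lambda\mathbf I-\mathbf N_0)&\mathbf 0\end{bmatrix}$, $\mathbf Q(\lambda)$ its stable spectral projection; $\mathbf K(x,y;\lambda)=-\mathbf R_r(x)\mathbf Qe^{\mathbf A_\infty(x-y)}\mathbf Q\mathbf R_\ell(y)$ for $x\ge y$ and $\mathbf R_r(x)(\mathbf I-\mathbf Q)e^{\mathbf A_\infty(x-y)}(\mathbf I-\mathbf Q)\mathbf R_\ell(y)$ for $x<y$. With $a=\frac{\beta(\lambda-\delta)-D\alpha/2}{\det\mathbf B}$, $b=\frac{-[\frac D2(\lambda-\delta)+\alpha\beta]}{\det\mathbf B}$, $\sigma_\pm=\sqrt{a\pm ib}=\kappa_\pm+i\eta_\pm$ (principal branch, $\kappa_\pm>0$), the eigenvalues of $\mathbf A_\infty(\lambda)$ are $\pm\sigma_\pm$, and $\kappa_1=\min\{\kappa_+,\kappa_-\}$. $\mathbf P(\lambda)$ is the eigenvector matrix with $\mathbf A_\infty=\mathbf P\mathbf D\mathbf P^{-1}$: $\mathbf P=\begin{bmatrix} i/\sigma_-&-i/\sigma_+&i/\sigma_+&-i/\sigma_-\\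 -1/\sigma_-&-1/\sigma_+&1/\sigma_+&1/\sigma_-\\ -i&i&i&-i\\ 1&1&1&1\end{bmatrix}$ if the four eigenvalues are distinct, and $\mathbf P=\begin{bmatrix}0&1&0&1\\1&0&1&0\\0&-\sigma&0&\sigma\\-\sigma&0&\sigma&0\end{bmatrix}$ if there are only two distinct eigenvalues $\pm\sigma$; $\operatorname{cond}(\mathbf P)=\|\mathbf P\|\|\mathbf P^{-1}\|$ (matrix 2-norm). *)

theory Defs
  imports "HOL-Analysis.Analysis"
begin

definition idx2 :: "2 \<Rightarrow> nat" where
  "idx2 i = (if i = 1 then 0 else 1)"

definition idx4 :: "4 \<Rightarrow> nat" where
  "idx4 i = (if i = 1 then 0 else if i = 2 then 1 else if i = 3 then 2 else 3)"

definition mat2 :: "'a \<Rightarrow> 'a \<Rightarrow> 'a \<Rightarrow> 'a \<Rightarrow> 'a^2^2" where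
  "mat2 a b c d = (\<chi> i j. [[a, b], [c, d]] ! idx2 i ! idx2 j)"

definition mat4 :: "'a list list \<Rightarrow> 'a^4^4" where
  "mat4 rs = (\<chi> i j. rs ! idx4 i ! idx4 j)"

text \<open>4x4 block matrix [[A11, A12],[A21, A22]] with 2x2 blocks.\<close>
definition blk :: "'a^2^2 \<Rightarrow> 'a^2^2 \<Rightarrow> 'a^2^2 \<Rightarrow> 'a^2^2 \<Rightarrow> 'a^4^4" where
  "blk A11 A12 A21 A22 = (\<chi> i j.
     let r = (if idx4 i < 2 then idx4 i else idx4 i - 2);
         c = (if idx4 j < 2 then idx4 j else idx4 j - 2);
         ri = (if r = 0 then 1 else 2 :: 2);
         cj = (if c = 0 then 1 else 2 :: 2);
         Bk = (if idx4 i < 2 then (if idx4 j < 2 then A11 else A12)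
               else (if idx4 j < 2 then A21 else A22))
     in Bk $ ri $ cj)"

definition cmat :: "real^'n^'m \<Rightarrow> complex^'n^'m" where
  "cmat A = (\<chi> i j. complex_of_real (A $ i $ j))"

definition opnorm :: "complex^'n^'m \<Rightarrow> real" where
  "opnorm A = onorm (\<lambda>v::complex^'n. A *v v)"

definition cond :: "complex^'n^'n \<Rightarrow> real" where
  "cond A = opnorm A * opnorm (matrix_inv A)"

primrec mpow :: "'a::semiring_1^'n^'n \<Rightarrow> nat \<Rightarrow> 'a^'n^'n" where
  "mpow A 0 = mat 1"
| "mpow A (Suc k) = A ** mpow A k"

definition mexp :: "complex^'n^'n \<Rightarrow> complex^'n^'n" where
  "mexp A = (\<Sum>k. (1 / fact k) *\<^sub>R mpow A k)"

definition psd_sqrt :: "real^2^2 \<Rightarrow> real^2^2" where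
  "psd_sqrt S = (THE T. transpose T = T \<and> (\<forall>v. 0 \<le> v \<bullet> (T *v v)) \<and> T ** T = S)"

definition stable_space :: "complex^4^4 \<Rightarrow> (complex^4) set" where
  "stable_space A = span (\<Union>\<mu>\<in>{\<mu>. Re \<mu> < 0}. {v. mpow (A - mat \<mu>) 4 *v v = 0})"

definition unstable_space :: "complex^4^4 \<Rightarrow> (complex^4) set" where
  "unstable_space A = span (\<Union>\<mu>\<in>{\<mu>. Re \<mu> > 0}. {v. mpow (A - mat \<mu>) 4 *v v = 0})"

definition stable_proj :: "complex^4^4 \<Rightarrow> complex^4^4" where
  "stable_proj A = (THE Q. (\<forall>v. Q *v v \<in> stable_space A)
       \<and> (\<forall>v\<in>stable_space A. Q *v v = v) \<and> (\<forall>v\<in>unstable_space A. Q *v v = 0))"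

definition Bm :: "real \<Rightarrow> real \<Rightarrow> real^2^2" where
  "Bm D \<beta> = mat2 \<beta> (- D / 2) (D / 2) \<beta>"

definition N0m :: "real \<Rightarrow> real \<Rightarrow> real^2^2" where
  "N0m \<delta> \<alpha> = mat2 \<delta> (- \<alpha>) \<alpha> \<delta>"

definition N1m :: "real \<Rightarrow> real \<Rightarrow> real^2^2" where
  "N1m \<epsilon> \<gamma> = mat2 \<epsilon> (- \<gamma>) \<gamma> \<epsilon>"

definition N2m :: "real \<Rightarrow> real \<Rightarrow> real^2^2" where
  "N2m \<mu> \<nu> = mat2 \<mu> (- \<nu>) \<nu> \<mu>"

definition psivec :: "complex \<Rightarrow> real^2" where
  "psivec z = (\<chi> i. if i = 1 then Re z else Im z)"

definition Mm :: "real \<Rightarrow> real \<Rightarrow> real \<Rightarrow> real \<Rightarrow> complex \<Rightarrow> real^2^2" where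
  "Mm \<epsilon> \<gamma> \<mu> \<nu> z =
     (let p = psivec z; n2 = (norm p)\<^sup>2;
          N1 = N1m \<epsilon> \<gamma>; N2 = N2m \<mu> \<nu>
      in n2 *\<^sub>R N1 + (n2 ^ 2) *\<^sub>R N2
         + (2 *\<^sub>R N1 + (4 * n2) *\<^sub>R N2) ** (\<chi> i j. p $ i * p $ j))"

definition ess_spec :: "real \<Rightarrow> real \<Rightarrow> real \<Rightarrow> real \<Rightarrow> complex set" where
  "ess_spec D \<beta> \<delta> \<alpha> =
     {(Complex \<delta> \<alpha>) - complex_of_real (s\<^sup>2) * Complex \<beta> (D / 2) | s. s \<in> (UNIV :: real set)}
   \<union> {(Complex \<delta> (- \<alpha>)) - complex_of_real (s\<^sup>2) * Complex \<beta> (- D / 2) | s. s \<in> (UNIV :: real set)}"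

definition Ainf :: "real \<Rightarrow> real \<Rightarrow> real \<Rightarrow> real \<Rightarrow> complex \<Rightarrow> complex^4^4" where
  "Ainf D \<beta> \<delta> \<alpha> lam = blk 0 (mat 1)
      (cmat (matrix_inv (Bm D \<beta>)) ** (mat lam - cmat (N0m \<delta> \<alpha>))) 0"

definition a_par :: "real \<Rightarrow> real \<Rightarrow> real \<Rightarrow> real \<Rightarrow> complex \<Rightarrow> complex" where
  "a_par D \<beta> \<delta> \<alpha> lam = (of_real \<beta> * (lam - of_real \<delta>) - of_real (D * \<alpha> / 2)) / of_real (det (Bm D \<beta>))"

definition b_par :: "real \<Rightarrow> real \<Rightarrow> real \<Rightarrow> real \<Rightarrow> complex \<Rightarrow> complex" where
  "b_par D \<beta> \<delta> \<alpha> lam = - (of_real (D / 2) * (lam - of_real \<delta>) + of_real (\<alpha> * \<beta>)) / of_real (det (Bm D \<beta>))"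

definition sigma_p :: "real \<Rightarrow> real \<Rightarrow> real \<Rightarrow> real \<Rightarrow> complex \<Rightarrow> complex" where
  "sigma_p D \<beta> \<delta> \<alpha> lam = csqrt (a_par D \<beta> \<delta> \<alpha> lam + \<i> * b_par D \<beta> \<delta> \<alpha> lam)"

definition sigma_m :: "real \<Rightarrow> real \<Rightarrow> real \<Rightarrow> real \<Rightarrow> complex \<Rightarrow> complex" where
  "sigma_m D \<beta> \<delta> \<alpha> lam = csqrt (a_par D \<beta> \<delta> \<alpha> lam - \<i> * b_par D \<beta> \<delta> \<alpha> lam)"

definition kappa1 :: "real \<Rightarrow> real \<Rightarrow> real \<Rightarrow> real \<Rightarrow> complex \<Rightarrow> real" where
  "kappa1 D \<beta> \<delta> \<alpha> lam = min (Re (sigma_p D \<beta> \<delta> \<alpha> lam)) (Re (sigma_m D \<beta> \<delta> \<alpha> lam))"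

text \<open>Eigenvector matrix P: the four eigenvalues \<open>\<plusminus>\<sigma>\<^sub>\<plusminus>\<close> are distinct iff
  \<open>\<sigma>\<^sub>+ \<noteq> \<sigma>\<^sub>-\<close> (their real parts are positive).\<close>
definition Pm :: "real \<Rightarrow> real \<Rightarrow> real \<Rightarrow> real \<Rightarrow> complex \<Rightarrow> complex^4^4" where
  "Pm D \<beta> \<delta> \<alpha> lam =
    (let sp = sigma_p D \<beta> \<delta> \<alpha> lam; sm = sigma_m D \<beta> \<delta> \<alpha> lam in
     if sp \<noteq> sm then
       mat4 [[\<i> / sm, - \<i> / sp, \<i> / sp, - \<i> / sm],
             [- 1 / sm, - 1 / sp, 1 / sp, 1 / sm],
             [- \<i>, \<i>, \<i>, - \<i>],
             [1, 1, 1, 1]]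
     else
       mat4 [[0, 1, 0, 1],
             [1, 0, 1, 0],
             [0, - sp, 0, sp],
             [- sp, 0, sp, 0]])"


definition absM :: "real^2^2 \<Rightarrow> real^2^2" where
  "absM M = psd_sqrt (transpose M ** M)"

definition Rmat :: "real \<Rightarrow> real \<Rightarrow> real^2^2 \<Rightarrow> complex^4^4" where
  "Rmat D \<beta> M = cmat (blk 0 0 (- (matrix_inv (Bm D \<beta>) ** M)) 0)"

definition Rl :: "real \<Rightarrow> real \<Rightarrow> real^2^2 \<Rightarrow> real^2^2 \<Rightarrow> complex^4^4" where
  "Rl D \<beta> V M = cmat (blk 0 0 (- (matrix_inv (Bm D \<beta>) ** V ** psd_sqrt (absM M))) 0)"

definition Rr :: "real^2^2 \<Rightarrow> complex^4^4" where
  "Rr M = cmat (blk (psd_sqrt (absM M)) 0 0 0)"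

text \<open>The kernel K(x,y;lam); \<open>Mx\<close>, \<open>My\<close> are M(x), M(y) and \<open>Vy\<close> is the polar factor V(y).\<close>
definition Kmat :: "real \<Rightarrow> real \<Rightarrow> real \<Rightarrow> real \<Rightarrow> complex \<Rightarrow> real \<Rightarrow> real \<Rightarrow>
     real^2^2 \<Rightarrow> real^2^2 \<Rightarrow> real^2^2 \<Rightarrow> complex^4^4" where
  "Kmat D \<beta> \<delta> \<alpha> lam x y Mx Vy My =
    (let A = Ainf D \<beta> \<delta> \<alpha> lam; Q = stable_proj A; E = mexp ((x - y) *\<^sub>R A) in
     if y \<le> x then - (Rr Mx ** Q ** E ** Q ** Rl D \<beta> Vy My)
     else Rr Mx ** (mat 1 - Q) ** E ** (mat 1 - Q) ** Rl D \<beta> Vy My)"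

end

theory Submission
  imports Defs
begin

lemma idx4_simps[simp]: "idx4 1 = 0" "idx4 2 = 1" "idx4 3 = 2" "idx4 4 = 3"
  by (simp_all add: idx4_def)
lemma idx2_simps[simp]: "idx2 1 = 0" "idx2 2 = 1"
  by (simp_all add: idx2_def)
lemma mat2_nth[simp]: "mat2 a b c d $ 1 $ 1 = a" "mat2 a b c d $ 1 $ 2 = b"
  "mat2 a b c d $ 2 $ 1 = c" "mat2 a b c d $ 2 $ 2 = d"
  by (simp_all add: mat2_def)
lemma mat4_nth[simp]: "mat4 rs $ i $ j = rs ! idx4 i ! idx4 j" by (simp add: mat4_def)
lemma cmat_nth[simp]: "cmat A $ i $ j = complex_of_real (A $ i $ j)" by (simp add: cmat_def)
lemma blk_nth[simp]:
  "blk A B C E $ 1 $ 1 = A $ 1 $ 1" "blk A B C E $ 1 $ 2 = A $ 1 $ 2" "blk A B C E $ 1 $ 3 = B $ 1 $ 1" "blk A B C E $ 1 $ 4 = B $ 1 $ 2"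
  "blk A B C E $ 2 $ 1 = A $ 2 $ 1" "blk A B C E $ 2 $ 2 = A $ 2 $ 2" "blk A B C E $ 2 $ 3 = B $ 2 $ 1" "blk A B C E $ 2 $ 4 = B $ 2 $ 2"
  "blk A B C E $ 3 $ 1 = C $ 1 $ 1" "blk A B C E $ 3 $ 2 = C $ 1 $ 2" "blk A B C E $ 3 $ 3 = E $ 1 $ 1" "blk A B C E $ 3 $ 4 = E $ 1 $ 2"
  "blk A B C E $ 4 $ 1 = C $ 2 $ 1" "blk A B C E $ 4 $ 2 = C $ 2 $ 2" "blk A B C E $ 4 $ 3 = E $ 2 $ 1" "blk A B C E $ 4 $ 4 = E $ 2 $ 2"
  by (simp_all add: blk_def Let_def)

lemmas m2simps = matrix_matrix_mult_def matrix_vector_mult_def transpose_def inner_vec_def sum_2 vec_eq_iff forall_2 mat_def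

lemma psd2_entries:
  fixes S :: "real^2^2"
  assumes "\<forall>v. 0 \<le> v \<bullet> (S *v v)" "S$1$2 = S$2$1"
  shows "0 \<le> S$1$1" "0 \<le> S$2$2" "(S$1$2)\<^sup>2 \<le> S$1$1 * S$2$2"
proof -
  have q: "0 \<le> S$1$1 * x*x + 2 * S$1$2 * x * y + S$2$2 * y * y" for x y
    using assms(1)[rule_format, of "vector [x, y]"] assms(2)
    by (simp add: m2simps algebra_simps)
  show a: "0 \<le> S$1$1" using q[of 1 0] by simp
  show b: "0 \<le> S$2$2" using q[of 0 1] by simp
  show "(S$1$2)\<^sup>2 \<le> S$1$1 * S$2$2"
  proof (cases "S$1$1 = 0")
    case True
    show ?thesis
    proof (rule ccontr)
      assume "\<not> ?thesis"
      then have nz: "S$1$2 \<noteq> 0" using True by simp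
      have "0 \<le> S$1$1 * (- (S$2$2+1)/(2*S$1$2)) * (- (S$2$2+1)/(2*S$1$2)) + 2 * S$1$2 * (- (S$2$2+1)/(2*S$1$2)) * 1 + S$2$2 * 1 * 1"
        by (rule q)
      also have "\<dots> = -1" using True nz by (simp add: field_simps)
      finally show False by simp
    qed
  next
    case False
    hence pos: "S$1$1 > 0" using a by simp
    have "0 \<le> S$1$1 * (S$1$1 * S$2$2 - (S$1$2)^2)"
      using q[of "- S$1$2" "S$1$1"] by (simp add: power2_eq_square algebra_simps)
    then show ?thesis using pos by (simp add: zero_le_mult_iff)
  qed
qed

lemma sqrt2_uniq_aux:
  fixes p q r p' q' r' :: real
  assumes "p \<ge> 0" "r \<ge> 0" "q\<^sup>2 \<le> p*r" "p' \<ge> 0" "r' \<ge> 0" "q'\<^sup>2 \<le> p'*r'"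
    "p\<^sup>2+q\<^sup>2 = p'\<^sup>2+q'\<^sup>2" "q*(p+r) = q'*(p'+r')" "q\<^sup>2+r\<^sup>2 = q'\<^sup>2+r'\<^sup>2"
  shows "p = p' \<and> q = q' \<and> r = r'"
proof -
  have e1: "(p*r - q\<^sup>2)\<^sup>2 = (p\<^sup>2+q\<^sup>2)*(q\<^sup>2+r\<^sup>2) - (q*(p+r))\<^sup>2"
    by (simp add: power2_eq_square algebra_simps)
  have e2: "(p'*r' - q'\<^sup>2)\<^sup>2 = (p'\<^sup>2+q'\<^sup>2)*(q'\<^sup>2+r'\<^sup>2) - (q'*(p'+r'))\<^sup>2"
    by (simp add: power2_eq_square algebra_simps)
  have sqd: "(p*r - q\<^sup>2)\<^sup>2 = (p'*r' - q'\<^sup>2)\<^sup>2" using e1 e2 assms(7-9) by simp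
  have d: "p*r - q\<^sup>2 = p'*r' - q'\<^sup>2"
    using sqd assms(3,6) power2_eq_iff_nonneg[of "p*r - q\<^sup>2" "p'*r'-q'\<^sup>2"] by simp
  have t1: "(p+r)\<^sup>2 = (p\<^sup>2+q\<^sup>2) + (q\<^sup>2+r\<^sup>2) + 2*(p*r - q\<^sup>2)"
    by (simp add: power2_eq_square algebra_simps)
  have t2: "(p'+r')\<^sup>2 = (p'\<^sup>2+q'\<^sup>2) + (q'\<^sup>2+r'\<^sup>2) + 2*(p'*r' - q'\<^sup>2)"
    by (simp add: power2_eq_square algebra_simps)
  have sqt: "(p+r)\<^sup>2 = (p'+r')\<^sup>2" using t1 t2 d assms(7-9) by simp
  have t: "p + r = p' + r'"
    using sqt assms(1,2,4,5) power2_eq_iff_nonneg[of "p+r" "p'+r'"] by simp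
  show ?thesis
  proof (cases "p + r = 0")
    case True
    then have "p = 0" "r = 0" "p' = 0" "r' = 0" using assms t by linarith+
    then show ?thesis using assms by simp
  next
    case False
    have "p*(p+r) = (p\<^sup>2+q\<^sup>2) + (p*r - q\<^sup>2)" by (simp add: power2_eq_square algebra_simps)
    moreover have "p'*(p'+r') = (p'\<^sup>2+q'\<^sup>2) + (p'*r' - q'\<^sup>2)" by (simp add: power2_eq_square algebra_simps)
    ultimately have "p*(p+r) = p'*(p'+r')" using d assms(7) by simp
    then have pp: "p = p'" using t False by (metis mult_cancel_right)
    have "r*(p+r) = (q\<^sup>2+r\<^sup>2) + (p*r - q\<^sup>2)" by (simp add: power2_eq_square algebra_simps)
    moreover have "r'*(p'+r') = (q'\<^sup>2+r'\<^sup>2) + (p'*r' - q'\<^sup>2)" by (simp add: power2_eq_square algebra_simps)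
    ultimately have "r*(p+r) = r'*(p'+r')" using d assms(9) by simp
    then have rr: "r = r'" using t False by (metis mult_cancel_right)
    have "q = q'" using assms(8) t False by (metis mult_cancel_right)
    then show ?thesis using pp rr by simp
  qed
qed

lemma mat22_eq: "(A::'a^2^2) = B \<longleftrightarrow> A$1$1 = B$1$1 \<and> A$1$2 = B$1$2 \<and> A$2$1 = B$2$1 \<and> A$2$2 = B$2$2"
  by (simp add: vec_eq_iff forall_2)
lemma vec2_eq: "(u::'a^2) = v \<longleftrightarrow> u$1 = v$1 \<and> u$2 = v$2"
  by (simp add: vec_eq_iff forall_2)
lemma mm2_nth: "((A::'a::semiring_1^2^2) ** B)$i$j = A$i$1 * B$1$j + A$i$2 * B$2$j"
  by (simp add: matrix_matrix_mult_def sum_2)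
lemma mv2_nth: "((A::'a::semiring_1^2^2) *v v)$i = A$i$1 * v$1 + A$i$2 * v$2"
  by (simp add: matrix_vector_mult_def sum_2)
lemma inner2: "(u::real^2) \<bullet> v = u$1 * v$1 + u$2 * v$2"
  by (simp add: inner_vec_def sum_2)
lemma transpose_nth[simp]: "transpose A $ i $ j = A $ j $ i"
  by (simp add: transpose_def)
lemma sym2: "transpose (S::'a^2^2) = S \<longleftrightarrow> S$1$2 = S$2$1"
  by (auto simp: mat22_eq)

definition psdp :: "real^2^2 \<Rightarrow> real^2^2 \<Rightarrow> bool" where
  "psdp S T \<longleftrightarrow> transpose T = T \<and> (\<forall>v. 0 \<le> v \<bullet> (T *v v)) \<and> T ** T = S"

lemma psd_sqrt_ex1:
  fixes S :: "real^2^2"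
  assumes sym: "transpose S = S" and pos: "\<forall>v. 0 \<le> v \<bullet> (S *v v)"
  shows "\<exists>!T. psdp S T"
proof -
  have s12: "S$1$2 = S$2$1" using sym by (simp add: sym2)
  note E = psd2_entries[OF pos s12]
  define d where "d = sqrt (S$1$1 * S$2$2 - (S$1$2)\<^sup>2)"
  define t where "t = sqrt (S$1$1 + S$2$2 + 2*d)"
  have d0: "d \<ge> 0" using E by (simp add: d_def)
  have dsq: "d\<^sup>2 = S$1$1 * S$2$2 - (S$1$2)\<^sup>2" using E by (simp add: d_def)
  have tsq: "t\<^sup>2 = S$1$1 + S$2$2 + 2*d" using E d0 by (simp add: t_def)
  have ex: "\<exists>T. psdp S T"
  proof (cases "t = 0")
    case True
    then have "S$1$1 + S$2$2 + 2*d = 0" using tsq by simp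
    then have z: "S$1$1 = 0" "S$2$2 = 0" "d = 0" using E d0 by linarith+
    then have "S$1$2 = 0" using E by simp
    then have "S = 0" using z s12 by (simp add: mat22_eq)
    then have "psdp S 0" by (simp add: psdp_def sym2)
    then show ?thesis by blast
  next
    case False
    define T where "T = mat2 ((S$1$1 + d)/t) (S$1$2/t) (S$1$2/t) ((S$2$2 + d)/t)"
    have tpos: "t > 0" using False E d0 by (simp add: t_def)
    have "transpose T = T" by (simp add: T_def sym2)
    moreover have "0 \<le> v \<bullet> (T *v v)" for v
    proof -
      have "v \<bullet> (T *v v) = ((S$1$1 + d) * v$1 * v$1 + 2 * S$1$2 * v$1 * v$2 + (S$2$2 + d) * v$2 * v$2) / t"
        by (simp add: T_def inner2 mv2_nth add_divide_distrib algebra_simps)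
      also have "\<dots> = (v \<bullet> (S *v v) + d * ((v$1)\<^sup>2 + (v$2)\<^sup>2)) / t"
        using s12 by (simp add: inner2 mv2_nth power2_eq_square algebra_simps)
      finally show ?thesis using pos d0 tpos by simp
    qed
    moreover have "T ** T = S"
    proof -
      have a: "(S$1$1 + d)*(S$1$1 + d) + S$1$2 * S$1$2 = S$1$1 * (t*t)" using dsq tsq by (simp add: power2_eq_square algebra_simps)
      have b: "S$1$2 * S$1$2 + (S$2$2 + d)*(S$2$2 + d) = S$2$2 * (t*t)" using dsq tsq by (simp add: power2_eq_square algebra_simps)
      have c: "(S$1$1 + d) * S$1$2 + S$1$2 * (S$2$2 + d) = S$1$2 * (t*t)" using tsq by (simp add: power2_eq_square algebra_simps)
      have c2: "S$1$2 * (S$1$1 + d) + (S$2$2 + d) * S$1$2 = S$1$2 * (t*t)" using c by (simp add: algebra_simps)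
      have tt: "t*t \<noteq> 0" using tpos by simp
      have e1: "(S$1$1 + d)/t * ((S$1$1 + d)/t) + S$1$2/t * (S$1$2/t) = S$1$1"
        using a tt by (simp add: divide_simps) 
      have e2: "S$1$2/t * ((S$1$1 + d)/t) + (S$2$2 + d)/t * (S$1$2/t) = S$1$2"
        using c2 tt by (simp add: divide_simps) 
      have e3: "(S$1$1 + d)/t * (S$1$2/t) + S$1$2/t * ((S$2$2 + d)/t) = S$1$2"
        using c tt by (simp add: divide_simps) 
      have e4: "S$1$2/t * (S$1$2/t) + (S$2$2 + d)/t * ((S$2$2 + d)/t) = S$2$2"
        using b tt by (simp add: divide_simps) 
      show ?thesis using e1 e2 e3 e4 s12
        by (simp add: T_def mat22_eq mm2_nth)
    qed
    ultimately show ?thesis unfolding psdp_def by blast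
  qed
  moreover have "T1 = T2" if "psdp S T1" "psdp S T2" for T1 T2
  proof -
    have sy1: "T1$1$2 = T1$2$1" "T2$1$2 = T2$2$1" using that unfolding psdp_def by (simp_all add: sym2)
    have p1: "\<forall>v. 0 \<le> v \<bullet> (T1 *v v)" "\<forall>v. 0 \<le> v \<bullet> (T2 *v v)" using that unfolding psdp_def by simp_all
    note E1' = psd2_entries[OF p1(1) sy1(1)] and E2' = psd2_entries[OF p1(2) sy1(2)]
    have sq: "T1 ** T1 = T2 ** T2" using that unfolding psdp_def by simp
    then have "(T1**T1)$1$1 = (T2**T2)$1$1" "(T1**T1)$1$2 = (T2**T2)$1$2" "(T1**T1)$2$2 = (T2**T2)$2$2" by simp_all
    then have eqs: "(T1$1$1)\<^sup>2 + (T1$1$2)\<^sup>2 = (T2$1$1)\<^sup>2 + (T2$1$2)\<^sup>2"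
      "T1$1$2 * (T1$1$1 + T1$2$2) = T2$1$2 * (T2$1$1 + T2$2$2)"
      "(T1$1$2)\<^sup>2 + (T1$2$2)\<^sup>2 = (T2$1$2)\<^sup>2 + (T2$2$2)\<^sup>2"
      using sy1 by (simp_all add: mm2_nth power2_eq_square algebra_simps)
    have "T1$1$1 = T2$1$1 \<and> T1$1$2 = T2$1$2 \<and> T1$2$2 = T2$2$2"
      by (rule sqrt2_uniq_aux[OF E1' E2' eqs])
    then show ?thesis using sy1 by (simp add: mat22_eq)
  qed
  ultimately show ?thesis by blast
qed

lemma psd_sqrt_props:
  fixes S :: "real^2^2"
  assumes "transpose S = S" "\<forall>v. 0 \<le> v \<bullet> (S *v v)"
  shows "transpose (psd_sqrt S) = psd_sqrt S" "\<forall>v. 0 \<le> v \<bullet> (psd_sqrt S *v v)"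
    "psd_sqrt S ** psd_sqrt S = S"
proof -
  have "psdp S (psd_sqrt S)"
    unfolding psd_sqrt_def psdp_def[symmetric]
    by (rule theI'[OF psd_sqrt_ex1[OF assms]])
  then show "transpose (psd_sqrt S) = psd_sqrt S" "\<forall>v. 0 \<le> v \<bullet> (psd_sqrt S *v v)"
    "psd_sqrt S ** psd_sqrt S = S" unfolding psdp_def by auto
qed

lemma inner_mat_mat:
  fixes X :: "real^'n^'m"
  shows "(X *v u) \<bullet> (X *v w) = u \<bullet> ((transpose X ** X) *v w)"
proof -
  have "(X *v u) \<bullet> (X *v w) = (u v* transpose X) \<bullet> (X *v w)" by simp
  also have "\<dots> = u \<bullet> (transpose X *v (X *v w))" by (rule dot_lmul_matrix)
  finally show ?thesis by (simp add: matrix_vector_mul_assoc)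
qed

lemma sqrt_chain_bound:
  fixes T A' M :: "real^2^2"
  assumes "transpose T = T" "T ** T = A'" "transpose A' = A'" "A' ** A' = transpose M ** M"
  shows "(norm (T *v u))\<^sup>2 \<le> norm u * norm (M *v u)"
proof -
  have "(norm (T *v u))\<^sup>2 = u \<bullet> (A' *v u)"
    by (simp add: power2_norm_eq_inner inner_mat_mat assms)
  also have "\<dots> \<le> norm u * norm (A' *v u)" by (rule norm_cauchy_schwarz)
  also have "norm (A' *v u) = norm (M *v u)"
  proof -
    have "(norm (A' *v u))\<^sup>2 = (norm (M *v u))\<^sup>2"
      by (simp add: power2_norm_eq_inner inner_mat_mat assms)
    then show ?thesis by (simp add: power2_eq_iff_nonneg)
  qed
  finally show ?thesis .
qed

lemma orth_norm:
  fixes V :: "real^'n^'n"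
  assumes "orthogonal_matrix V"
  shows "norm (V *v w) = norm w"
proof -
  have "(norm (V *v w))\<^sup>2 = (norm w)\<^sup>2"
    using assms by (simp add: power2_norm_eq_inner inner_mat_mat orthogonal_matrix)
  then show ?thesis by (simp add: power2_eq_iff_nonneg)
qed

lemma matrix_inv_eq:
  fixes A X :: "'a::semiring_1^'n^'n"
  assumes "A ** X = mat 1" "X ** A = mat 1"
  shows "matrix_inv A = X"
  unfolding matrix_inv_def
proof (rule some_equality)
  show "A ** X = mat 1 \<and> X ** A = mat 1" using assms by simp
  fix Y assume "A ** Y = mat 1 \<and> Y ** A = mat 1"
  then have "Y = Y ** (A ** X)" "Y ** A = mat 1" using assms by simp_all
  then show "Y = X" by (metis matrix_mul_assoc matrix_mul_lid)
qed

definition dB :: "real \<Rightarrow> real \<Rightarrow> real" where "dB D \<beta> = \<beta>\<^sup>2 + D\<^sup>2/4"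

lemma dB_pos: "(D, \<beta>) \<noteq> (0, 0) \<Longrightarrow> dB D \<beta> > 0"
  by (auto simp: dB_def add_pos_nonneg add_nonneg_pos)

lemma mat1_2: "(mat 1 :: 'a::semiring_1^2^2) = mat2 1 0 0 1"
  by (simp add: mat22_eq mat_def)

lemma Binv:
  assumes "(D, \<beta>) \<noteq> (0, 0)"
  shows "matrix_inv (Bm D \<beta>) = mat2 (\<beta>/dB D \<beta>) (D/2/dB D \<beta>) (-D/2/dB D \<beta>) (\<beta>/dB D \<beta>)"
proof (rule matrix_inv_eq)
  have d: "dB D \<beta> \<noteq> 0" using dB_pos[OF assms] by simp
  have e: "\<beta> * \<beta> + D * D / 4 = dB D \<beta>" by (simp add: dB_def power2_eq_square)
  show "Bm D \<beta> ** mat2 (\<beta>/dB D \<beta>) (D/2/dB D \<beta>) (-D/2/dB D \<beta>) (\<beta>/dB D \<beta>) = mat 1"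
    using d e by (simp add: Bm_def mat1_2 mat22_eq mm2_nth field_simps)
  show "mat2 (\<beta>/dB D \<beta>) (D/2/dB D \<beta>) (-D/2/dB D \<beta>) (\<beta>/dB D \<beta>) ** Bm D \<beta> = mat 1"
    using d e by (simp add: Bm_def mat1_2 mat22_eq mm2_nth field_simps)
qed

lemma det_Bm: "det (Bm D \<beta>) = dB D \<beta>"
  by (simp add: det_2 Bm_def dB_def power2_eq_square)

lemma norm2_sq: "(norm (u::real^2))\<^sup>2 = (u$1)\<^sup>2 + (u$2)\<^sup>2"
  unfolding power2_norm_eq_inner inner2 by (simp add: power2_eq_square)

lemma Binv_norm:
  assumes "(D, \<beta>) \<noteq> (0, 0)"
  shows "(norm (matrix_inv (Bm D \<beta>) *v w))\<^sup>2 = (norm w)\<^sup>2 / dB D \<beta>"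
proof -
  have d: "dB D \<beta> \<noteq> 0" using dB_pos[OF assms] by simp
  have e: "\<beta> * \<beta> + D * D / 4 = dB D \<beta>" by (simp add: dB_def power2_eq_square)
  have "(\<beta> / dB D \<beta> * w $ 1 + D / 2 / dB D \<beta> * w $ 2)\<^sup>2 + (- D / 2 / dB D \<beta> * w $ 1 + \<beta> / dB D \<beta> * w $ 2)\<^sup>2
      = ((\<beta> * \<beta> + D * D / 4) * ((w$1)\<^sup>2 + (w$2)\<^sup>2)) / (dB D \<beta> * dB D \<beta>)"
    using d by (simp add: field_simps power2_eq_square)
  also have "\<dots> = ((w$1)\<^sup>2 + (w$2)\<^sup>2) / dB D \<beta>" using d by (simp add: e)
  finally show ?thesis
    by (simp add: Binv[OF assms] norm2_sq mv2_nth)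
qed

lemma norm4_sq: "(norm (v::complex^4))\<^sup>2 = (cmod (v$1))\<^sup>2 + (cmod (v$2))\<^sup>2 + (cmod (v$3))\<^sup>2 + (cmod (v$4))\<^sup>2"
  unfolding norm_vec_def L2_set_def by (simp add: sum_4)

lemma mv4_nth: "((A::'a::semiring_1^4^4) *v v)$i = A$i$1 * v$1 + A$i$2 * v$2 + A$i$3 * v$3 + A$i$4 * v$4"
  by (simp add: matrix_vector_mult_def sum_4)

lemma mm4_nth: "((A::'a::semiring_1^4^4) ** B)$i$j = A$i$1 * B$1$j + A$i$2 * B$2$j + A$i$3 * B$3$j + A$i$4 * B$4$j"
  by (simp add: matrix_matrix_mult_def sum_4)

lemma cmod_lin2: "(cmod (complex_of_real a * z1 + complex_of_real b * z2))\<^sup>2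
   = (a * Re z1 + b * Re z2)\<^sup>2 + (a * Im z1 + b * Im z2)\<^sup>2"
  by (simp add: cmod_power2)

lemma cblk_sq:
  fixes S :: "real^2^2" and v :: "complex^4"
  defines "u \<equiv> vector [Re (v$1), Re (v$2)] :: real^2" and "w \<equiv> vector [Im (v$1), Im (v$2)] :: real^2"
  shows "(norm (cmat (blk S 0 0 0) *v v))\<^sup>2 = (norm (S *v u))\<^sup>2 + (norm (S *v w))\<^sup>2"
    and "(norm (cmat (blk 0 0 S 0) *v v))\<^sup>2 = (norm (S *v u))\<^sup>2 + (norm (S *v w))\<^sup>2"
    and "(norm u)\<^sup>2 + (norm w)\<^sup>2 \<le> (norm v)\<^sup>2"
proof -
  show "(norm (cmat (blk S 0 0 0) *v v))\<^sup>2 = (norm (S *v u))\<^sup>2 + (norm (S *v w))\<^sup>2"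
    unfolding norm4_sq norm2_sq by (simp add: mv4_nth mv2_nth cmod_lin2 u_def w_def)
  show "(norm (cmat (blk 0 0 S 0) *v v))\<^sup>2 = (norm (S *v u))\<^sup>2 + (norm (S *v w))\<^sup>2"
    unfolding norm4_sq norm2_sq by (simp add: mv4_nth mv2_nth cmod_lin2 u_def w_def)
  show "(norm u)\<^sup>2 + (norm w)\<^sup>2 \<le> (norm v)\<^sup>2"
    unfolding norm4_sq norm2_sq by (simp add: u_def w_def cmod_power2)
qed

lemma sq_to_norm:
  assumes "x\<^sup>2 \<le> c * y\<^sup>2" "y \<ge> 0"
  shows "x \<le> sqrt c * y"
proof -
  have "x \<le> sqrt (c * y\<^sup>2)" using assms(1) by (rule real_le_rsqrt)
  also have "\<dots> = sqrt c * y" using assms(2) by (simp add: real_sqrt_mult)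
  finally show ?thesis .
qed

lemma cblk_bound:
  fixes S :: "real^2^2"
  assumes H: "\<And>u. (norm (S *v u))\<^sup>2 \<le> c * (norm u)\<^sup>2"
  shows "opnorm (cmat (blk S 0 0 0)) \<le> sqrt c" "opnorm (cmat (blk 0 0 S 0)) \<le> sqrt c"
proof -
  have c0: "c \<ge> 0"
  proof -
    have "0 \<le> c * (norm (vector [1, 0] :: real^2))\<^sup>2" using H[of "vector [1,0]"]
      by (meson order_trans zero_le_power2)
    moreover have "(norm (vector [1, 0] :: real^2))\<^sup>2 = 1" unfolding norm2_sq by simp
    ultimately show ?thesis by simp
  qed
  have key: "(norm (S *v u))\<^sup>2 + (norm (S *v w))\<^sup>2 \<le> c * (norm v)\<^sup>2"
    if "(norm u)\<^sup>2 + (norm w)\<^sup>2 \<le> (norm v)\<^sup>2" for u w :: "real^2" and v :: "complex^4"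
  proof -
    have "(norm (S *v u))\<^sup>2 + (norm (S *v w))\<^sup>2 \<le> c * (norm u)\<^sup>2 + c * (norm w)\<^sup>2"
      using H[of u] H[of w] by simp
    also have "\<dots> = c * ((norm u)\<^sup>2 + (norm w)\<^sup>2)" by (simp add: algebra_simps)
    also have "\<dots> \<le> c * (norm v)\<^sup>2" using that c0 by (simp add: mult_left_mono)
    finally show ?thesis .
  qed
  show "opnorm (cmat (blk S 0 0 0)) \<le> sqrt c"
    unfolding opnorm_def
  proof (rule onorm_le)
    fix v :: "complex^4"
    show "norm (cmat (blk S 0 0 0) *v v) \<le> sqrt c * norm v"
      by (rule sq_to_norm) (simp_all add: cblk_sq(1) key cblk_sq(3))
  qed
  show "opnorm (cmat (blk 0 0 S 0)) \<le> sqrt c"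
    unfolding opnorm_def
  proof (rule onorm_le)
    fix v :: "complex^4"
    show "norm (cmat (blk 0 0 S 0) *v v) \<le> sqrt c * norm v"
      by (rule sq_to_norm) (simp_all add: cblk_sq(2) key cblk_sq(3))
  qed
qed

lemma cblk_lower:
  fixes W :: "real^2^2"
  shows "norm (W *v u) \<le> opnorm (cmat (blk 0 0 W 0)) * norm u"
proof -
  define v0 :: "complex^4" where "v0 = (\<chi> i. if i = 1 then complex_of_real (u$1) else if i = 2 then complex_of_real (u$2) else 0)"
  have uu: "vector [Re (v0$1), Re (v0$2)] = u" "vector [Im (v0$1), Im (v0$2)] = (0::real^2)"
    by (simp_all add: v0_def vec2_eq)
  have "(norm (cmat (blk 0 0 W 0) *v v0))\<^sup>2 = (norm (W *v u))\<^sup>2"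
    using cblk_sq(2)[of W v0] uu by simp
  then have n1: "norm (cmat (blk 0 0 W 0) *v v0) = norm (W *v u)" by (simp add: power2_eq_iff_nonneg)
  have "(norm v0)\<^sup>2 = (norm u)\<^sup>2" unfolding norm4_sq norm2_sq by (simp add: v0_def)
  then have n2: "norm v0 = norm u" by (simp add: power2_eq_iff_nonneg)
  show ?thesis
    using onorm[OF matrix_vector_mul_bounded_linear, of "cmat (blk 0 0 W 0)" v0] n1 n2
    by (simp add: opnorm_def)
qed

definition diag4 :: "complex^4 \<Rightarrow> complex^4^4" where
  "diag4 d = (\<chi> i j. if i = j then d$i else 0)"

lemma diag4_mv: "diag4 d *v v = (\<chi> i. d$i * v$i)"
proof -
  have "(\<Sum>j\<in>UNIV. (if i = j then d$i else 0) * v$j) = d$i * v$i" for i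
  proof -
    have "(\<Sum>j\<in>UNIV. (if i = j then d$i else 0) * v$j) = (\<Sum>j\<in>UNIV. if i = j then d$i * v$j else 0)"
      by (rule sum.cong) auto
    also have "\<dots> = d$i * v$i" by (simp add: sum.delta)
    finally show ?thesis .
  qed
  then show ?thesis by (simp add: diag4_def vec_eq_iff matrix_vector_mult_def)
qed
lemma diag4_mm: "diag4 a ** diag4 b = diag4 (\<chi> i. a$i * b$i)"
proof -
  have "(\<Sum>k\<in>UNIV. (if i = k then a$i else 0) * (if k = j then b$k else 0)) = (if i = j then a$i * b$i else 0)" for i j :: 4
  proof -
    have "(\<Sum>k\<in>UNIV. (if i = k then a$i else 0) * (if k = j then b$k else 0)) = (\<Sum>k\<in>UNIV. if i = k then a$i * (if k = j then b$k else 0) else 0)"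
      by (rule sum.cong) auto
    also have "\<dots> = a$i * (if i = j then b$i else 0)" by (simp add: sum.delta)
    finally show ?thesis by simp
  qed
  then show ?thesis by (simp add: diag4_def vec_eq_iff matrix_matrix_mult_def)
qed
lemma diag4_one: "diag4 (\<chi> i. 1) = mat 1"
  by (simp add: diag4_def mat_def vec_eq_iff)

lemma diag4_const: "diag4 (\<chi> i. c) = mat c"
  by (simp add: diag4_def mat_def vec_eq_iff)

lemma diag4_diff: "diag4 a - diag4 b = diag4 (\<chi> i. a$i - b$i)"
  by (simp add: diag4_def vec_eq_iff)

lemma diag4_scaleR: "c *\<^sub>R diag4 a = diag4 (\<chi> i. c *\<^sub>R a$i)"
  by (simp add: diag4_def vec_eq_iff)

lemma mv_scaleR_c: "(A::complex^'n^'m) *v (c *\<^sub>R x) = c *\<^sub>R (A *v x)"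
  by (simp add: vec_eq_iff matrix_vector_mult_def scaleR_sum_right)

lemma mv_neg: "(- (A::complex^'n^'m)) *v x = - (A *v x)"
  by (simp add: vec_eq_iff matrix_vector_mult_def sum_negf)

lemma mm_sub_ldistrib: "(A::complex^'n^'m) ** (B - C) = A ** B - A ** C"
  by (simp add: vec_eq_iff matrix_matrix_mult_def sum_subtractf right_diff_distrib)

lemma mm_add_rdistrib: "((A::complex^'n^'m) + B) ** C = A ** C + B ** C"
  by (simp add: vec_eq_iff matrix_matrix_mult_def sum.distrib distrib_right)

lemma mm_sub_rdistrib: "((A::complex^'n^'m) - B) ** C = A ** C - B ** C"
  by (simp add: vec_eq_iff matrix_matrix_mult_def sum_subtractf left_diff_distrib)

locale spec4 =
  fixes P Pi :: "complex^4^4" and l :: "complex^4"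
  assumes PPi: "P ** Pi = mat 1" and PiP: "Pi ** P = mat 1"
begin

definition cj :: "complex^4^4 \<Rightarrow> complex^4^4" where "cj X = P ** X ** Pi"

lemma cj_mult: "cj X ** cj Y = cj (X ** Y)"
proof -
  have "P ** X ** Pi ** (P ** Y ** Pi) = P ** X ** (Pi ** P) ** Y ** Pi"
    by (simp add: matrix_mul_assoc)
  then show ?thesis by (simp add: cj_def PiP matrix_mul_assoc)
qed

lemma cj_one: "cj (mat 1) = mat 1" by (simp add: cj_def PPi)

lemma cj_diff: "cj X - cj Y = cj (X - Y)"
  by (simp add: cj_def mm_sub_ldistrib mm_sub_rdistrib)

lemma cj_scaleR: "c *\<^sub>R cj X = cj (c *\<^sub>R X)"
  by (simp add: cj_def scalar_matrix_assoc matrix_scalar_ac)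

lemma cj_mv: "Pi *v (cj X *v v) = X *v (Pi *v v)"
  by (simp add: cj_def matrix_vector_mul_assoc matrix_mul_assoc PiP)

lemma P_Pi_v: "P *v (Pi *v v) = v" by (simp add: matrix_vector_mul_assoc PPi)
lemma Pi_P_v: "Pi *v (P *v v) = v" by (simp add: matrix_vector_mul_assoc PiP)

lemma mpow_cj: "mpow (cj X) k = cj (mpow X k)"
  by (induction k) (simp_all add: cj_one cj_mult)

lemma mpow_diag: "mpow (diag4 d) k = diag4 (\<chi> i. d$i ^ k)"
  by (induction k) (simp_all add: diag4_one[symmetric] diag4_mm)

lemma cj_linear: "bounded_linear cj"
proof -
  have "linear cj"
    by (rule linearI) (simp_all add: cj_def matrix_add_ldistrib mm_add_rdistrib
        scalar_matrix_assoc matrix_scalar_ac)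
  then show ?thesis by (simp add: linear_conv_bounded_linear)
qed

lemma diag4_linear: "bounded_linear diag4"
proof -
  have "linear diag4"
    by (rule linearI) (simp_all add: diag4_def vec_eq_iff)
  then show ?thesis by (simp add: linear_conv_bounded_linear)
qed

lemma exp_vec_sums: "(\<lambda>k. (\<chi> i. d$i ^ k /\<^sub>R fact k)) sums (\<chi> i. exp (d$i))"
  unfolding sums_def
proof (rule vec_tendstoI)
  fix i
  show "((\<lambda>n. (\<Sum>k<n. \<chi> i. d $ i ^ k /\<^sub>R fact k) $ i) \<longlongrightarrow> (\<chi> i. exp (d $ i)) $ i) sequentially"
    using exp_converges[of "d$i"] by (simp add: sums_def)
qed

lemma mexp_cj: "mexp (cj (diag4 d)) = cj (diag4 (\<chi> i. exp (d$i)))"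
proof -
  have "(\<lambda>k. diag4 (\<chi> i. d$i ^ k /\<^sub>R fact k)) sums diag4 (\<chi> i. exp (d$i))"
    by (rule bounded_linear.sums[OF diag4_linear exp_vec_sums])
  then have "(\<lambda>k. cj (diag4 (\<chi> i. d$i ^ k /\<^sub>R fact k))) sums cj (diag4 (\<chi> i. exp (d$i)))"
    by (rule bounded_linear.sums[OF cj_linear])
  moreover have "cj (diag4 (\<chi> i. d$i ^ k /\<^sub>R fact k)) = (1 / fact k) *\<^sub>R mpow (cj (diag4 d)) k" for k
    by (simp add: mpow_cj mpow_diag cj_scaleR diag4_scaleR divide_inverse_commute)
  ultimately show ?thesis unfolding mexp_def by (simp add: sums_iff)
qed

end

lemma mat_mm_left: "(mat c ** (A::complex^'n^'n)) = (\<chi> i j. c * A$i$j)"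
proof -
  have "(\<Sum>k\<in>UNIV. (if i = k then c else 0) * A$k$j) = c * A$i$j" for i j
  proof -
    have "(\<Sum>k\<in>UNIV. (if i = k then c else 0) * A$k$j) = (\<Sum>k\<in>UNIV. if i = k then c * A$k$j else 0)"
      by (rule sum.cong) auto
    also have "\<dots> = c * A$i$j" by (simp add: sum.delta)
    finally show ?thesis .
  qed
  then show ?thesis by (simp add: vec_eq_iff matrix_matrix_mult_def mat_def)
qed

lemma mat_mm_right: "((A::complex^'n^'n) ** mat c) = (\<chi> i j. c * A$i$j)"
proof -
  have "(\<Sum>k\<in>UNIV. A$i$k * (if k = j then c else 0)) = c * A$i$j" for i j
  proof -
    have "(\<Sum>k\<in>UNIV. A$i$k * (if k = j then c else 0)) = (\<Sum>k\<in>UNIV. if k = j then c * A$i$k else 0)"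
      by (rule sum.cong) auto
    also have "\<dots> = c * A$i$j" by (simp add: sum.delta')
    finally show ?thesis .
  qed
  then show ?thesis by (simp add: vec_eq_iff matrix_matrix_mult_def mat_def)
qed

lemma mat_comm: "mat c ** (A::complex^'n^'n) = A ** mat c"
  by (simp add: mat_mm_left mat_mm_right)

lemma opnorm_nonneg: "0 \<le> opnorm (X::complex^'n^'m)"
  unfolding opnorm_def by (rule onorm_pos_le[OF matrix_vector_mul_bounded_linear])

lemma opnorm_apply: "norm ((X::complex^'n^'m) *v v) \<le> opnorm X * norm v"
  unfolding opnorm_def by (rule onorm[OF matrix_vector_mul_bounded_linear])

lemma opnorm_mm: "opnorm ((X::complex^'n^'m) ** Y) \<le> opnorm X * opnorm Y"
proof -
  have "(\<lambda>v. (X ** Y) *v v) = (\<lambda>v. X *v v) \<circ> (\<lambda>v. Y *v v)"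
    by (simp add: fun_eq_iff matrix_vector_mul_assoc)
  then show ?thesis unfolding opnorm_def
    using onorm_compose[OF matrix_vector_mul_bounded_linear matrix_vector_mul_bounded_linear, of X Y]
    by simp
qed

lemma opnorm_neg: "opnorm (- (X::complex^'n^'m)) = opnorm X"
proof -
  have "(\<lambda>v. (- X) *v v) = (\<lambda>v. - (X *v v))" by (simp add: fun_eq_iff mv_neg)
  then show ?thesis unfolding opnorm_def using onorm_neg[of "\<lambda>v. X *v v"] by simp
qed

lemma opnorm_diag:
  assumes "\<And>i. cmod (d$i) \<le> m"
  shows "opnorm (diag4 d) \<le> m"
  unfolding opnorm_def
proof (rule onorm_le)
  fix v :: "complex^4"
  have m0: "0 \<le> m" using assms[of 1] norm_ge_zero order_trans by blast
  have sq: "(cmod (d$i * v$i))\<^sup>2 \<le> m\<^sup>2 * (cmod (v$i))\<^sup>2" for i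
  proof -
    have "cmod (d$i * v$i) \<le> m * cmod (v$i)" using assms[of i] by (simp add: norm_mult mult_right_mono)
    then have "(cmod (d$i * v$i))\<^sup>2 \<le> (m * cmod (v$i))\<^sup>2" by (simp add: power_mono)
    then show ?thesis by (simp add: power_mult_distrib)
  qed
  have "(norm (diag4 d *v v))\<^sup>2 \<le> m\<^sup>2 * (norm v)\<^sup>2"
    unfolding diag4_mv norm4_sq using sq[of 1] sq[of 2] sq[of 3] sq[of 4]
    by (simp add: algebra_simps)
  then have "norm (diag4 d *v v) \<le> sqrt (m\<^sup>2) * norm v" by (rule sq_to_norm) simp
  then show "norm (diag4 d *v v) \<le> m * norm v" using m0 by simp
qed

context spec4 begin

lemma cj_mat: "cj (mat c) = mat c"
proof -
  have "P ** mat c ** Pi = P ** (mat c ** Pi)" by (simp add: matrix_mul_assoc)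
  also have "\<dots> = P ** (Pi ** mat c)" by (simp add: mat_comm)
  also have "\<dots> = mat c" by (simp add: matrix_mul_assoc PPi)
  finally show ?thesis by (simp add: cj_def)
qed

lemma inj_Pi: "(x = 0) \<longleftrightarrow> (Pi *v x = 0)"
  by (metis P_Pi_v matrix_vector_mult_0_right)

lemma gen_ker:
  "(mpow (cj (diag4 l) - mat \<mu>) 4 *v v = 0) \<longleftrightarrow> (\<forall>i. (l$i - \<mu>)^4 * (Pi *v v)$i = 0)"
proof -
  have m: "mat \<mu> = cj (diag4 (\<chi> i. \<mu>))" by (simp add: diag4_const cj_mat)
  have "cj (diag4 l) - mat \<mu> = cj (diag4 l - diag4 (\<chi> i. \<mu>))" unfolding m by (rule cj_diff)
  also have "diag4 l - diag4 (\<chi> i. \<mu>) = diag4 (\<chi> i. l$i - \<mu>)" by (simp add: diag4_diff)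
  finally have "cj (diag4 l) - mat \<mu> = cj (diag4 (\<chi> i. l$i - \<mu>))" .
  then have "mpow (cj (diag4 l) - mat \<mu>) 4 = cj (diag4 (\<chi> i. (l$i - \<mu>)^4))"
    by (simp add: mpow_cj mpow_diag)
  then have "(mpow (cj (diag4 l) - mat \<mu>) 4 *v v = 0) \<longleftrightarrow> (Pi *v (cj (diag4 (\<chi> i. (l$i - \<mu>)^4)) *v v) = 0)"
    using inj_Pi[of "mpow (cj (diag4 l) - mat \<mu>) 4 *v v"] by simp
  then show ?thesis
    by (simp add: cj_mv diag4_mv vec_eq_iff)
qed

end

context spec4 begin
lemma space_eq:
  assumes sel: "\<And>i. sel (l$i) \<longleftrightarrow> i \<in> I"
  shows "span (\<Union>\<mu>\<in>{\<mu>. sel \<mu>}. {v. mpow (cj (diag4 l) - mat \<mu>) 4 *v v = 0})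
         = {v. \<forall>i. i \<notin> I \<longrightarrow> (Pi *v v)$i = 0}" (is "span ?U = ?W")
proof
  have sub: "subspace ?W"
    by (rule subspaceI) (simp_all add: matrix_vector_right_distrib mv_scaleR_c)
  have "?U \<subseteq> ?W"
  proof
    fix v assume "v \<in> ?U"
    then obtain \<mu> where mu: "sel \<mu>" "mpow (cj (diag4 l) - mat \<mu>) 4 *v v = 0" by auto
    show "v \<in> ?W"
    proof (clarify)
      fix i assume "i \<notin> I"
      then have "l$i \<noteq> \<mu>" using sel mu(1) by auto
      then show "(Pi *v v)$i = 0" using mu(2) gen_ker by auto
    qed
  qed
  then show "span ?U \<subseteq> ?W" using sub by (rule span_minimal)
next
  show "?W \<subseteq> span ?U"
  proof
    fix v assume v: "v \<in> ?W"
    define c where "c = Pi *v v"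
    define t where "t i = P *v (\<chi> j. if j = i then c$i else 0)" for i
    have t_in: "t i \<in> span ?U" for i
    proof (cases "i \<in> I")
      case True
      have "Pi *v t i = (\<chi> j. if j = i then c$i else 0)" by (simp add: t_def Pi_P_v)
      then have "mpow (cj (diag4 l) - mat (l$i)) 4 *v t i = 0"
        by (simp add: gen_ker)
      moreover have "sel (l$i)" using True sel by simp
      ultimately have "t i \<in> ?U" by blast
      then show ?thesis by (rule span_base)
    next
      case False
      then have "c$i = 0" using v by (simp add: c_def)
      then have "(\<chi> j. if j = i then c$i else 0) = 0" by (simp add: vec_eq_iff)
      then have "t i = 0" by (simp add: t_def)
      then show ?thesis by (simp add: span_zero)
    qed
    have "(\<chi> j. if j = 1 then c$1 else 0) + (\<chi> j. if j = 2 then c$2 else 0)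
        + (\<chi> j. if j = 3 then c$3 else 0) + (\<chi> j. if j = 4 then c$4 else 0) = c"
      by (simp add: vec_eq_iff forall_4)
    then have "t 1 + t 2 + t 3 + t 4 = P *v c"
      by (simp add: t_def matrix_vector_right_distrib[symmetric])
    also have "\<dots> = v" by (simp add: c_def P_Pi_v)
    finally have "v = t 1 + t 2 + t 3 + t 4" by simp
    then show "v \<in> span ?U" using t_in by (simp add: span_add)
  qed
qed

end

context spec4 begin

lemma stable_proj_cj:
  assumes neg: "\<And>i. Re (l$i) < 0 \<longleftrightarrow> i \<in> I" and pos: "\<And>i. Re (l$i) > 0 \<longleftrightarrow> i \<notin> I"
  shows "stable_proj (cj (diag4 l)) = cj (diag4 (\<chi> i. if i \<in> I then 1 else 0))"
proof -
  define \<pi> :: "complex^4" where "\<pi> = (\<chi> i. if i \<in> I then 1 else 0)"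
  define Q0 where "Q0 = cj (diag4 \<pi>)"
  have S: "stable_space (cj (diag4 l)) = {v. \<forall>i. i \<notin> I \<longrightarrow> (Pi *v v)$i = 0}"
    using space_eq[of "\<lambda>\<mu>. Re \<mu> < 0" I] neg by (simp add: stable_space_def)
  have U: "unstable_space (cj (diag4 l)) = {v. \<forall>i. i \<notin> -I \<longrightarrow> (Pi *v v)$i = 0}"
    using space_eq[of "\<lambda>\<mu>. Re \<mu> > 0" "-I"] pos by (simp add: unstable_space_def)
  have PQ: "Pi *v (Q0 *v v) = (\<chi> i. \<pi>$i * (Pi *v v)$i)" for v
    by (simp add: Q0_def cj_mv diag4_mv)
  have Q1: "Q0 *v v \<in> stable_space (cj (diag4 l))" for v
    using PQ by (simp add: S \<pi>_def)
  have Q2: "Q0 *v v = v" if "v \<in> stable_space (cj (diag4 l))" for v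
  proof -
    have "Pi *v (Q0 *v v) = Pi *v v" using that PQ by (simp add: S \<pi>_def vec_eq_iff)
    then have "P *v (Pi *v (Q0 *v v)) = P *v (Pi *v v)" by simp
    then show ?thesis by (simp add: P_Pi_v)
  qed
  have Q3: "Q0 *v v = 0" if "v \<in> unstable_space (cj (diag4 l))" for v
  proof -
    have "Pi *v (Q0 *v v) = 0" using that PQ by (simp add: U \<pi>_def vec_eq_iff)
    then show ?thesis using inj_Pi by blast
  qed
  show ?thesis unfolding stable_proj_def \<pi>_def[symmetric] Q0_def[symmetric]
  proof (rule the_equality)
    show "(\<forall>v. Q0 *v v \<in> stable_space (cj (diag4 l))) \<and> (\<forall>v\<in>stable_space (cj (diag4 l)). Q0 *v v = v)
      \<and> (\<forall>v\<in>unstable_space (cj (diag4 l)). Q0 *v v = 0)"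
      using Q1 Q2 Q3 by blast
  next
    fix Q assume H: "(\<forall>v. Q *v v \<in> stable_space (cj (diag4 l))) \<and> (\<forall>v\<in>stable_space (cj (diag4 l)). Q *v v = v)
      \<and> (\<forall>v\<in>unstable_space (cj (diag4 l)). Q *v v = 0)"
    have "Q *v v = Q0 *v v" for v
    proof -
      have u: "v - Q0 *v v \<in> unstable_space (cj (diag4 l))"
        using PQ by (simp add: U \<pi>_def matrix_vector_mult_diff_distrib)
      have "Q *v v = Q *v (Q0 *v v) + Q *v (v - Q0 *v v)"
        by (simp add: matrix_vector_right_distrib[symmetric])
      also have "\<dots> = Q0 *v v" using H Q1 u by simp
      finally show ?thesis .
    qed
    then show "Q = Q0" by (simp add: matrix_eq)
  qed
qed

lemma mexp_scaled: "mexp (t *\<^sub>R cj (diag4 l)) = cj (diag4 (\<chi> i. exp (t *\<^sub>R l$i)))"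
  by (simp add: cj_scaleR diag4_scaleR mexp_cj)

lemma opnorm_cj: "opnorm (cj X) \<le> opnorm P * opnorm X * opnorm Pi"
proof -
  have "opnorm (cj X) \<le> opnorm (P ** X) * opnorm Pi" unfolding cj_def by (rule opnorm_mm)
  also have "\<dots> \<le> opnorm P * opnorm X * opnorm Pi"
    by (rule mult_right_mono[OF opnorm_mm opnorm_nonneg])
  finally show ?thesis .
qed

lemma cj_triple: "cj A1 ** cj A2 ** cj A3 = cj (A1 ** A2 ** A3)"
  by (simp add: cj_mult)

lemma stable_bound:
  assumes neg: "\<And>i. Re (l$i) < 0 \<longleftrightarrow> i \<in> I" and pos: "\<And>i. Re (l$i) > 0 \<longleftrightarrow> i \<notin> I"
    and kI: "\<And>i. i \<in> I \<Longrightarrow> Re (l$i) \<le> - k" and t: "t \<ge> 0"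
  shows "opnorm (stable_proj (cj (diag4 l)) ** mexp (t *\<^sub>R cj (diag4 l)) ** stable_proj (cj (diag4 l)))
           \<le> opnorm P * opnorm Pi * exp (- k * t)"
proof -
  define e :: "complex^4" where "e = (\<chi> i. if i \<in> I then exp (t *\<^sub>R l$i) else 0)"
  have "stable_proj (cj (diag4 l)) ** mexp (t *\<^sub>R cj (diag4 l)) ** stable_proj (cj (diag4 l)) = cj (diag4 e)"
    apply (simp add: stable_proj_cj[OF neg pos] mexp_scaled cj_triple diag4_mm)
    apply (rule arg_cong[where f="\<lambda>x. cj (diag4 x)"])
    apply (simp add: vec_eq_iff e_def)
    done
  moreover have "opnorm (diag4 e) \<le> exp (- k * t)"
  proof (rule opnorm_diag)
    fix i
    show "cmod (e$i) \<le> exp (- k * t)"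
    proof (cases "i \<in> I")
      case True
      have "t * Re (l$i) \<le> t * (- k)" using kI[OF True] t by (metis mult_left_mono)
      then show ?thesis using True by (simp add: e_def norm_exp_eq_Re mult.commute)
    qed (simp add: e_def)
  qed
  ultimately show ?thesis
    using opnorm_cj[of "diag4 e"] opnorm_nonneg[of P] opnorm_nonneg[of Pi]
    by (smt (verit) mult_left_mono mult_right_mono mult.commute mult.assoc)
qed

lemma unstable_bound:
  assumes neg: "\<And>i. Re (l$i) < 0 \<longleftrightarrow> i \<in> I" and pos: "\<And>i. Re (l$i) > 0 \<longleftrightarrow> i \<notin> I"
    and kI: "\<And>i. i \<notin> I \<Longrightarrow> Re (l$i) \<ge> k" and t: "t \<le> 0"
  shows "opnorm ((mat 1 - stable_proj (cj (diag4 l))) ** mexp (t *\<^sub>R cj (diag4 l)) ** (mat 1 - stable_proj (cj (diag4 l))))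
           \<le> opnorm P * opnorm Pi * exp (k * t)"
proof -
  define e :: "complex^4" where "e = (\<chi> i. if i \<in> I then 0 else exp (t *\<^sub>R l$i))"
  have m1: "mat 1 - stable_proj (cj (diag4 l)) = cj (diag4 (\<chi> i. if i \<in> I then 0 else 1))"
  proof -
    have "mat 1 - stable_proj (cj (diag4 l)) = cj (diag4 (\<chi> i. 1)) - cj (diag4 (\<chi> i. if i \<in> I then 1 else 0))"
      by (simp add: stable_proj_cj[OF neg pos] diag4_one cj_one)
    also have "\<dots> = cj (diag4 (\<chi> i. if i \<in> I then 0 else 1))"
      by (simp add: cj_diff diag4_diff vec_eq_iff if_distrib cong: if_cong)
    finally show ?thesis .
  qed
  have "(mat 1 - stable_proj (cj (diag4 l))) ** mexp (t *\<^sub>R cj (diag4 l)) ** (mat 1 - stable_proj (cj (diag4 l))) = cj (diag4 e)"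
    unfolding m1
    apply (simp add: mexp_scaled cj_triple diag4_mm)
    apply (rule arg_cong[where f="\<lambda>x. cj (diag4 x)"])
    apply (simp add: vec_eq_iff e_def)
    done
  moreover have "opnorm (diag4 e) \<le> exp (k * t)"
  proof (rule opnorm_diag)
    fix i
    show "cmod (e$i) \<le> exp (k * t)"
    proof (cases "i \<in> I")
      case False
      have "t * Re (l$i) \<le> t * k" using kI[OF False] t by (simp add: mult_left_mono_neg)
      then show ?thesis using False by (simp add: e_def norm_exp_eq_Re mult.commute)
    qed (simp add: e_def)
  qed
  ultimately show ?thesis
    using opnorm_cj[of "diag4 e"] opnorm_nonneg[of P] opnorm_nonneg[of Pi]
    by (smt (verit) mult_left_mono mult_right_mono mult.commute mult.assoc)
qed

end

definition v4 :: "'a list \<Rightarrow> 'a^4" where "v4 xs = (\<chi> i. xs ! idx4 i)"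
lemma v4_nth[simp]: "v4 xs $ i = xs ! idx4 i" by (simp add: v4_def)

lemma mat44_eq: "(A::'a^4^4) = B \<longleftrightarrow> (\<forall>i j. A$i$j = B$i$j)"
  by (simp add: vec_eq_iff)

lemma mm_diag4: "X ** diag4 d = (\<chi> i j. X$i$j * d$j)"
proof -
  have "(\<Sum>k\<in>UNIV. X$i$k * (if k = j then d$k else 0)) = X$i$j * d$j" for i j
  proof -
    have "(\<Sum>k\<in>UNIV. X$i$k * (if k = j then d$k else 0)) = (\<Sum>k\<in>UNIV. if k = j then X$i$k * d$k else 0)"
      by (rule sum.cong) auto
    also have "\<dots> = X$i$j * d$j" by (simp add: sum.delta')
    finally show ?thesis .
  qed
  then show ?thesis by (simp add: vec_eq_iff matrix_matrix_mult_def diag4_def)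
qed

lemma mat1_4: "(mat 1 :: 'a::semiring_1^4^4) $ i $ j = (if i = j then 1 else 0)"
  by (simp add: mat_def)

definition PD :: "complex \<Rightarrow> complex \<Rightarrow> complex^4^4" where
  "PD sp sm = mat4 [[\<i> / sm, - \<i> / sp, \<i> / sp, - \<i> / sm],
             [- 1 / sm, - 1 / sp, 1 / sp, 1 / sm],
             [- \<i>, \<i>, \<i>, - \<i>],
             [1, 1, 1, 1]]"

definition PDi :: "complex \<Rightarrow> complex \<Rightarrow> complex^4^4" where
  "PDi sp sm = mat4 [[- \<i> * sm / 4, - sm / 4, \<i> / 4, 1 / 4],
             [\<i> * sp / 4, - sp / 4, - \<i> / 4, 1 / 4],
             [- \<i> * sp / 4, sp / 4, - \<i> / 4, 1 / 4],
             [\<i> * sm / 4, sm / 4, \<i> / 4, 1 / 4]]"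

lemma PD_inv:
  assumes "sp \<noteq> 0" "sm \<noteq> 0"
  shows "PD sp sm ** PDi sp sm = mat 1" "PDi sp sm ** PD sp sm = mat 1"
  using assms
  by (simp_all add: mat44_eq forall_4 mm4_nth mat1_4 PD_def PDi_def field_simps)

lemma i_sq: "\<i> * (\<i> * x) = - x" by simp

lemma PD_eig:
  assumes "sp \<noteq> 0" "sm \<noteq> 0" "sp * sp = a + \<i> * b" "sm * sm = a - \<i> * b"
  shows "blk 0 (mat 1) (mat2 a (- b) b a) 0 ** PD sp sm = PD sp sm ** diag4 (v4 [- sm, - sp, sp, sm])"
proof -
  have a: "a = (sp * sp + sm * sm) / 2" using assms(3,4) by simp
  have d: "sp * sp - sm * sm = 2 * \<i> * b" using assms(3,4) by simp
  have b: "b = - \<i> * (sp * sp - sm * sm) / 2" unfolding d by (simp add: algebra_simps)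
  show ?thesis using assms(1,2) unfolding a b
    by (simp add: mat44_eq forall_4 mm4_nth mm_diag4 mat1_4 PD_def field_simps mat_def)
qed

definition PE :: "complex \<Rightarrow> complex^4^4" where
  "PE s = mat4 [[0, 1, 0, 1], [1, 0, 1, 0], [0, - s, 0, s], [- s, 0, s, 0]]"

definition PEi :: "complex \<Rightarrow> complex^4^4" where
  "PEi s = mat4 [[0, 1/2, 0, - 1/(2 * s)], [1/2, 0, - 1/(2 * s), 0], [0, 1/2, 0, 1/(2 * s)], [1/2, 0, 1/(2 * s), 0]]"

lemma PE_inv:
  assumes "s \<noteq> 0"
  shows "PE s ** PEi s = mat 1" "PEi s ** PE s = mat 1"
  using assms
  by (simp_all add: mat44_eq forall_4 mm4_nth mat1_4 PE_def PEi_def field_simps)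

lemma PE_eig:
  assumes "s \<noteq> 0" "s * s = a" "b = 0"
  shows "blk 0 (mat 1) (mat2 a (- b) b a) 0 ** PE s = PE s ** diag4 (v4 [- s, - s, s, s])"
  using assms
  by (simp add: mat44_eq forall_4 mm4_nth mm_diag4 mat1_4 PE_def mat_def)

lemma Ainf_G:
  assumes "(D, \<beta>) \<noteq> (0, 0)"
  shows "Ainf D \<beta> \<delta> \<alpha> lam = blk 0 (mat 1) (mat2 (a_par D \<beta> \<delta> \<alpha> lam) (- b_par D \<beta> \<delta> \<alpha> lam) (b_par D \<beta> \<delta> \<alpha> lam) (a_par D \<beta> \<delta> \<alpha> lam)) 0"
proof -
  have d: "complex_of_real (dB D \<beta>) \<noteq> 0" using dB_pos[OF assms] by simp
  have G: "cmat (matrix_inv (Bm D \<beta>)) ** (mat lam - cmat (N0m \<delta> \<alpha>)) = mat2 (a_par D \<beta> \<delta> \<alpha> lam) (- b_par D \<beta> \<delta> \<alpha> lam) (b_par D \<beta> \<delta> \<alpha> lam) (a_par D \<beta> \<delta> \<alpha> lam)"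
    using d by (simp add: mat22_eq mm2_nth Binv[OF assms] N0m_def mat_def a_par_def b_par_def det_Bm field_simps)
  show ?thesis unfolding Ainf_def G ..
qed

lemma key1:
  assumes "(D, \<beta>) \<noteq> (0, 0)"
  shows "(a_par D \<beta> \<delta> \<alpha> lam + \<i> * b_par D \<beta> \<delta> \<alpha> lam) * Complex \<beta> (D/2) = lam - Complex \<delta> \<alpha>"
proof -
  have d: "complex_of_real (dB D \<beta>) \<noteq> 0" using dB_pos[OF assms] by simp
  have e: "complex_of_real (dB D \<beta>) = of_real \<beta> * of_real \<beta> + of_real D * of_real D / 4"
    by (simp add: dB_def power2_eq_square)
  show ?thesis using d unfolding a_par_def b_par_def det_Bm Complex_eq
    by (simp add: field_simps) (simp add: e algebra_simps)
qed

lemma key2: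
  assumes "(D, \<beta>) \<noteq> (0, 0)"
  shows "(a_par D \<beta> \<delta> \<alpha> lam - \<i> * b_par D \<beta> \<delta> \<alpha> lam) * Complex \<beta> (- D/2) = lam - Complex \<delta> (- \<alpha>)"
proof -
  have d: "complex_of_real (dB D \<beta>) \<noteq> 0" using dB_pos[OF assms] by simp
  have e: "complex_of_real (dB D \<beta>) = of_real \<beta> * of_real \<beta> + of_real D * of_real D / 4"
    by (simp add: dB_def power2_eq_square)
  show ?thesis using d unfolding a_par_def b_par_def det_Bm Complex_eq
    by (simp add: field_simps) (simp add: e algebra_simps)
qed

lemma csqrt_re_zero:
  assumes "\<not> Re (csqrt z) > 0"
  shows "\<exists>s::real. z = - complex_of_real (s\<^sup>2)"
proof -
  have "Re (csqrt z) = 0" using assms Re_csqrt[of z] by simp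
  moreover have "\<And>w. Re w = 0 \<Longrightarrow> w = \<i> * complex_of_real (Im w)" by (simp add: complex_eq_iff)
  ultimately obtain y where c: "csqrt z = \<i> * complex_of_real y" by blast
  have "z = (csqrt z)\<^sup>2" by (rule power2_csqrt[symmetric])
  also have "\<dots> = - complex_of_real (y\<^sup>2)" unfolding c by (simp add: power2_eq_square algebra_simps)
  finally show ?thesis by blast
qed

lemma sigma_pos:
  assumes "(D, \<beta>) \<noteq> (0, 0)" "lam \<notin> ess_spec D \<beta> \<delta> \<alpha>"
  shows "Re (sigma_p D \<beta> \<delta> \<alpha> lam) > 0" "Re (sigma_m D \<beta> \<delta> \<alpha> lam) > 0"
proof -
  show "Re (sigma_p D \<beta> \<delta> \<alpha> lam) > 0"
  proof (rule ccontr)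
    assume "\<not> ?thesis"
    then obtain s where s: "a_par D \<beta> \<delta> \<alpha> lam + \<i> * b_par D \<beta> \<delta> \<alpha> lam = - complex_of_real (s\<^sup>2)"
      using csqrt_re_zero unfolding sigma_p_def by blast
    have "lam = Complex \<delta> \<alpha> - complex_of_real (s\<^sup>2) * Complex \<beta> (D / 2)"
      using key1[OF assms(1), of \<delta> \<alpha> lam] s by (simp add: algebra_simps)
    then have "lam \<in> ess_spec D \<beta> \<delta> \<alpha>" unfolding ess_spec_def by blast
    then show False using assms(2) by simp
  qed
  show "Re (sigma_m D \<beta> \<delta> \<alpha> lam) > 0"
  proof (rule ccontr)
    assume "\<not> ?thesis"
    then obtain s where s: "a_par D \<beta> \<delta> \<alpha> lam - \<i> * b_par D \<beta> \<delta> \<alpha> lam = - complex_of_real (s\<^sup>2)"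
      using csqrt_re_zero unfolding sigma_m_def by blast
    have "lam = Complex \<delta> (- \<alpha>) - complex_of_real (s\<^sup>2) * Complex \<beta> (- D / 2)"
      using key2[OF assms(1), of \<delta> \<alpha> lam] s by (simp add: algebra_simps)
    then have "lam \<in> ess_spec D \<beta> \<delta> \<alpha>" unfolding ess_spec_def by blast
    then show False using assms(2) by simp
  qed
qed

lemma MtM_props:
  fixes M :: "real^2^2"
  shows "transpose (transpose M ** M) = transpose M ** M" "\<forall>v. 0 \<le> v \<bullet> ((transpose M ** M) *v v)"
proof -
  show "transpose (transpose M ** M) = transpose M ** M" by (simp add: matrix_transpose_mul)
  show "\<forall>v. 0 \<le> v \<bullet> ((transpose M ** M) *v v)"
    using inner_mat_mat[of M] by (metis inner_ge_zero)
qed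

lemma T_bound:
  fixes M :: "real^2^2"
  assumes Db: "(D, \<beta>) \<noteq> (0, 0)"
  shows "(norm (psd_sqrt (absM M) *v u))\<^sup>2 \<le> sqrt (dB D \<beta>) * opnorm (Rmat D \<beta> M) * (norm u)\<^sup>2"
proof -
  let ?A = "absM M" and ?T = "psd_sqrt (absM M)"
  note PA = psd_sqrt_props[OF MtM_props(1) MtM_props(2)[of M]]
  have A_sym: "transpose ?A = ?A" and A_psd: "\<forall>v. 0 \<le> v \<bullet> (?A *v v)" and A_sq: "?A ** ?A = transpose M ** M"
    using PA unfolding absM_def by auto
  note PT = psd_sqrt_props[OF A_sym A_psd]
  have c1: "(norm (?T *v u))\<^sup>2 \<le> norm u * norm (M *v u)"
    by (rule sqrt_chain_bound[OF PT(1) PT(3) A_sym A_sq])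
  have dpos: "dB D \<beta> > 0" by (rule dB_pos[OF Db])
  have "norm ((- (matrix_inv (Bm D \<beta>) ** M)) *v u) \<le> opnorm (Rmat D \<beta> M) * norm u"
    using cblk_lower[of "- (matrix_inv (Bm D \<beta>) ** M)" u] by (simp add: Rmat_def)
  moreover have "norm ((- (matrix_inv (Bm D \<beta>) ** M)) *v u) = norm (M *v u) / sqrt (dB D \<beta>)"
  proof -
    have "(- (matrix_inv (Bm D \<beta>) ** M)) *v u = - ((matrix_inv (Bm D \<beta>) ** M) *v u)"
      by (simp add: vec_eq_iff matrix_vector_mult_def sum_negf)
    also have "(matrix_inv (Bm D \<beta>) ** M) *v u = matrix_inv (Bm D \<beta>) *v (M *v u)"
      by (simp add: matrix_vector_mul_assoc)
    finally have "(- (matrix_inv (Bm D \<beta>) ** M)) *v u = - (matrix_inv (Bm D \<beta>) *v (M *v u))" .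
    then have "(norm ((- (matrix_inv (Bm D \<beta>) ** M)) *v u))\<^sup>2 = (norm (M *v u))\<^sup>2 / dB D \<beta>"
      by (simp add: Binv_norm[OF Db])
    also have "\<dots> = (norm (M *v u) / sqrt (dB D \<beta>))\<^sup>2" using dpos by (simp add: power_divide)
    finally have sq: "(norm ((- (matrix_inv (Bm D \<beta>) ** M)) *v u))\<^sup>2 = (norm (M *v u) / sqrt (dB D \<beta>))\<^sup>2" .
    have nn: "0 \<le> norm (M *v u) / sqrt (dB D \<beta>)" using dpos by simp
    show ?thesis using sq power2_eq_iff_nonneg[OF norm_ge_zero[of "(- (matrix_inv (Bm D \<beta>) ** M)) *v u"] nn] by simp
  qed
  ultimately have "norm (M *v u) \<le> sqrt (dB D \<beta>) * opnorm (Rmat D \<beta> M) * norm u"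
    using dpos by (simp add: divide_le_eq mult.commute mult.left_commute)
  then have "norm u * norm (M *v u) \<le> norm u * (sqrt (dB D \<beta>) * opnorm (Rmat D \<beta> M) * norm u)"
    by (simp add: mult_left_mono)
  then show ?thesis using c1 by (simp add: power2_eq_square mult_ac)
qed

lemma Rr_bound:
  assumes Db: "(D, \<beta>) \<noteq> (0, 0)"
  shows "opnorm (Rr M) \<le> sqrt (sqrt (dB D \<beta>) * opnorm (Rmat D \<beta> M))"
  unfolding Rr_def by (rule cblk_bound(1)) (rule T_bound[OF Db])

lemma Rl_bound:
  assumes Db: "(D, \<beta>) \<noteq> (0, 0)" and V: "orthogonal_matrix V"
  shows "opnorm (Rl D \<beta> V M) \<le> sqrt (opnorm (Rmat D \<beta> M) / sqrt (dB D \<beta>))"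
  unfolding Rl_def
proof (rule cblk_bound(2))
  fix u :: "real^2"
  have dpos: "dB D \<beta> > 0" by (rule dB_pos[OF Db])
  have "(- (matrix_inv (Bm D \<beta>) ** V ** psd_sqrt (absM M))) *v u = - ((matrix_inv (Bm D \<beta>) ** V ** psd_sqrt (absM M)) *v u)"
    by (simp add: vec_eq_iff matrix_vector_mult_def sum_negf)
  also have "(matrix_inv (Bm D \<beta>) ** V ** psd_sqrt (absM M)) *v u = matrix_inv (Bm D \<beta>) *v (V *v (psd_sqrt (absM M) *v u))"
    by (simp add: matrix_vector_mul_assoc matrix_mul_assoc)
  finally have "(- (matrix_inv (Bm D \<beta>) ** V ** psd_sqrt (absM M))) *v u = - (matrix_inv (Bm D \<beta>) *v (V *v (psd_sqrt (absM M) *v u)))" .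
  then have "(norm ((- (matrix_inv (Bm D \<beta>) ** V ** psd_sqrt (absM M))) *v u))\<^sup>2 = (norm (psd_sqrt (absM M) *v u))\<^sup>2 / dB D \<beta>"
    by (simp add: Binv_norm[OF Db] orth_norm[OF V])
  also have "\<dots> \<le> sqrt (dB D \<beta>) * opnorm (Rmat D \<beta> M) * (norm u)\<^sup>2 / dB D \<beta>"
    using T_bound[OF Db] dpos by (simp add: divide_right_mono)
  also have "\<dots> = opnorm (Rmat D \<beta> M) / sqrt (dB D \<beta>) * (norm u)\<^sup>2"
  proof -
    have "dB D \<beta> = sqrt (dB D \<beta>) * sqrt (dB D \<beta>)" using dpos by simp
    then show ?thesis using dpos by (simp add: field_simps)
  qed
  finally show "(norm ((- (matrix_inv (Bm D \<beta>) ** V ** psd_sqrt (absM M))) *v u))\<^sup>2 \<le> opnorm (Rmat D \<beta> M) / sqrt (dB D \<beta>) * (norm u)\<^sup>2" .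
qed

lemma RrRl:
  assumes Db: "(D, \<beta>) \<noteq> (0, 0)" and V: "orthogonal_matrix V"
  shows "opnorm (Rr Mx) * opnorm (Rl D \<beta> V My) \<le> sqrt (opnorm (Rmat D \<beta> Mx) * opnorm (Rmat D \<beta> My))"
proof -
  have dpos: "dB D \<beta> > 0" by (rule dB_pos[OF Db])
  have "opnorm (Rr Mx) * opnorm (Rl D \<beta> V My) \<le> sqrt (sqrt (dB D \<beta>) * opnorm (Rmat D \<beta> Mx)) * sqrt (opnorm (Rmat D \<beta> My) / sqrt (dB D \<beta>))"
    by (rule mult_mono[OF Rr_bound[OF Db] Rl_bound[OF Db V] _ opnorm_nonneg]) (use dpos in \<open>simp add: opnorm_nonneg\<close>)
  also have "\<dots> = sqrt (opnorm (Rmat D \<beta> Mx) * opnorm (Rmat D \<beta> My))"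
    using dpos by (simp add: real_sqrt_mult[symmetric])
  finally show ?thesis .
qed

lemma sqrt_prod_bound:
  fixes rx ry C a x y :: real
  assumes "0 \<le> rx" "0 \<le> ry" "rx \<le> C * exp (- a * \<bar>x\<bar>)" "ry \<le> C * exp (- a * \<bar>y\<bar>)" "C > 0"
  shows "sqrt (rx * ry) \<le> C * exp (- a * (\<bar>x\<bar> + \<bar>y\<bar>) / 2)"
proof -
  have "rx * ry \<le> (C * exp (- a * \<bar>x\<bar>)) * (C * exp (- a * \<bar>y\<bar>))"
    using assms by (intro mult_mono) auto
  also have "\<dots> = (C * exp (- a * (\<bar>x\<bar> + \<bar>y\<bar>) / 2))\<^sup>2"
    by (simp add: power2_eq_square mult_exp_exp algebra_simps)
  finally have "sqrt (rx * ry) \<le> sqrt ((C * exp (- a * (\<bar>x\<bar> + \<bar>y\<bar>) / 2))\<^sup>2)"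
    by (rule real_sqrt_le_mono)
  also have "\<dots> = C * exp (- a * (\<bar>x\<bar> + \<bar>y\<bar>) / 2)" using assms(5) by simp
  finally show ?thesis .
qed

lemma opnorm_mm3: "opnorm ((X::complex^'n^'n) ** Y ** Z) \<le> opnorm X * opnorm Y * opnorm Z"
proof -
  have "opnorm (X ** Y ** Z) \<le> opnorm (X ** Y) * opnorm Z" by (rule opnorm_mm)
  also have "\<dots> \<le> opnorm X * opnorm Y * opnorm Z"
    by (rule mult_right_mono[OF opnorm_mm opnorm_nonneg])
  finally show ?thesis .
qed

lemma norm_axis_c: "norm (axis j (1::complex)) = 1"
proof -
  have "(\<Sum>i\<in>UNIV. (norm ((axis j (1::complex)) $ i))\<^sup>2) = (\<Sum>i\<in>UNIV. if i = j then 1 else 0)"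
    by (rule sum.cong) (auto simp: axis_def)
  also have "\<dots> = 1" by (simp add: sum.delta')
  finally show ?thesis unfolding norm_vec_def L2_set_def by simp
qed

lemma entry_le_opnorm: "cmod ((K::complex^'n^'m) $ i $ j) \<le> opnorm K"
proof -
  have "(K *v axis j 1) $ i = K $ i $ j"
    by (simp add: matrix_vector_mult_def axis_def if_distrib cong: if_cong)
  then have "cmod (K $ i $ j) \<le> norm (K *v axis j 1)" using Finite_Cartesian_Product.norm_nth_le[of "K *v axis j 1" i] by simp
  also have "\<dots> \<le> opnorm K * norm (axis j (1::complex))" by (rule opnorm_apply)
  finally show ?thesis by (simp add: norm_axis_c)
qed

theorem lemma6p7:
  fixes D \<beta> \<delta> \<alpha> \<epsilon> \<gamma> \<mu> \<nu> C_R a_R :: real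
    and lam :: complex
    and \<psi> \<psi>' \<psi>'' :: "real \<Rightarrow> complex"
    and V :: "real \<Rightarrow> real^2^2"
  assumes beta_nonneg: "\<beta> \<ge> 0"
    and D_beta: "(D, \<beta>) \<noteq> (0, 0)"
    and d1: "\<And>x. (\<psi> has_vector_derivative \<psi>' x) (at x)"
    and d2: "\<And>x. (\<psi>' has_vector_derivative \<psi>'' x) (at x)"
    and cgle: "\<And>x. complex_of_real \<alpha> * \<psi> x + complex_of_real (D / 2) * \<psi>'' x
                  + complex_of_real \<gamma> * (cmod (\<psi> x))\<^sup>2 * \<psi> x
                  + complex_of_real \<nu> * (cmod (\<psi> x))^4 * \<psi> x
               = \<i> * complex_of_real \<delta> * \<psi> x + \<i> * complex_of_real \<epsilon> * (cmod (\<psi> x))\<^sup>2 * \<psi> x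
                  + \<i> * complex_of_real \<beta> * \<psi>'' x + \<i> * complex_of_real \<mu> * (cmod (\<psi> x))^4 * \<psi> x"
    and pulse_top: "(\<psi> \<longlongrightarrow> 0) at_top"
    and pulse_bot: "(\<psi> \<longlongrightarrow> 0) at_bot"
    and polar: "\<And>x. orthogonal_matrix (V x)
                  \<and> Mm \<epsilon> \<gamma> \<mu> \<nu> (\<psi> x) = V x ** absM (Mm \<epsilon> \<gamma> \<mu> \<nu> (\<psi> x))"
    and lam: "lam \<notin> ess_spec D \<beta> \<delta> \<alpha>"
    and CR: "C_R > 0" and aR: "a_R > 0"
    and Rbound: "\<And>x. opnorm (Rmat D \<beta> (Mm \<epsilon> \<gamma> \<mu> \<nu> (\<psi> x))) \<le> C_R * exp (- a_R * \<bar>x\<bar>)"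
  shows "(\<forall>x y. y \<le> x \<longrightarrow>
            opnorm (Kmat D \<beta> \<delta> \<alpha> lam x y (Mm \<epsilon> \<gamma> \<mu> \<nu> (\<psi> x)) (V y) (Mm \<epsilon> \<gamma> \<mu> \<nu> (\<psi> y)))
            \<le> sqrt 2 * cond (Pm D \<beta> \<delta> \<alpha> lam) * C_R * exp (- a_R * (\<bar>x\<bar> + \<bar>y\<bar>) / 2)
               * exp (- kappa1 D \<beta> \<delta> \<alpha> lam * (x - y)))
       \<and> (\<forall>x y. x \<le> y \<longrightarrow>
            opnorm (Kmat D \<beta> \<delta> \<alpha> lam x y (Mm \<epsilon> \<gamma> \<mu> \<nu> (\<psi> x)) (V y) (Mm \<epsilon> \<gamma> \<mu> \<nu> (\<psi> y)))
            \<le> sqrt 2 * cond (Pm D \<beta> \<delta> \<alpha> lam) * C_R * exp (- a_R * (\<bar>x\<bar> + \<bar>y\<bar>) / 2)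
               * exp (kappa1 D \<beta> \<delta> \<alpha> lam * (x - y)))
       \<and> (\<exists>C. \<forall>i j x y.
            cmod (Kmat D \<beta> \<delta> \<alpha> lam x y (Mm \<epsilon> \<gamma> \<mu> \<nu> (\<psi> x)) (V y) (Mm \<epsilon> \<gamma> \<mu> \<nu> (\<psi> y)) $ i $ j)
              \<le> C * exp (- a_R * (\<bar>x\<bar> + \<bar>y\<bar>) / 2)
          \<and> cmod (Kmat D \<beta> \<delta> \<alpha> lam x y (Mm \<epsilon> \<gamma> \<mu> \<nu> (\<psi> x)) (V y) (Mm \<epsilon> \<gamma> \<mu> \<nu> (\<psi> y)) $ i $ j)
              \<le> C * exp (- kappa1 D \<beta> \<delta> \<alpha> lam * \<bar>x - y\<bar>))"
proof -
  define sp where "sp = sigma_p D \<beta> \<delta> \<alpha> lam"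
  define sm where "sm = sigma_m D \<beta> \<delta> \<alpha> lam"
  define a where "a = a_par D \<beta> \<delta> \<alpha> lam"
  define b where "b = b_par D \<beta> \<delta> \<alpha> lam"
  define \<kappa> where "\<kappa> = kappa1 D \<beta> \<delta> \<alpha> lam"
  have sp_pos: "Re sp > 0" and sm_pos: "Re sm > 0"
    using sigma_pos[OF D_beta lam] by (simp_all add: sp_def sm_def)
  have sp2: "sp * sp = a + \<i> * b"
    unfolding sp_def sigma_p_def a_def b_def by (simp only: power2_eq_square[symmetric] power2_csqrt)
  have sm2: "sm * sm = a - \<i> * b"
    unfolding sm_def sigma_m_def a_def b_def by (simp only: power2_eq_square[symmetric] power2_csqrt)
  have sp0: "sp \<noteq> 0" using sp_pos by auto
  have sm0: "sm \<noteq> 0" using sm_pos by auto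
  have AG: "Ainf D \<beta> \<delta> \<alpha> lam = blk 0 (mat 1) (mat2 a (- b) b a) 0"
    unfolding a_def b_def by (rule Ainf_G[OF D_beta])
  define l where "l = v4 [- sm, - sp, sp, sm]"
  obtain P Pi where PP: "spec4 P Pi" "Pm D \<beta> \<delta> \<alpha> lam = P" "Ainf D \<beta> \<delta> \<alpha> lam = P ** diag4 l ** Pi"
  proof (cases "sp = sm")
    case False
    have inv: "PD sp sm ** PDi sp sm = mat 1" "PDi sp sm ** PD sp sm = mat 1"
      using PD_inv[OF sp0 sm0] by simp_all
    have e: "Ainf D \<beta> \<delta> \<alpha> lam ** PD sp sm = PD sp sm ** diag4 l"
      unfolding AG l_def by (rule PD_eig[OF sp0 sm0 sp2 sm2])
    have "Ainf D \<beta> \<delta> \<alpha> lam = Ainf D \<beta> \<delta> \<alpha> lam ** (PD sp sm ** PDi sp sm)" using inv by simp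
    also have "\<dots> = PD sp sm ** diag4 l ** PDi sp sm" by (simp add: matrix_mul_assoc e)
    finally have A: "Ainf D \<beta> \<delta> \<alpha> lam = PD sp sm ** diag4 l ** PDi sp sm" .
    have "Pm D \<beta> \<delta> \<alpha> lam = PD sp sm"
      using False unfolding Pm_def Let_def sp_def[symmetric] sm_def[symmetric] PD_def by simp
    moreover have "spec4 (PD sp sm) (PDi sp sm)" using inv by unfold_locales
    ultimately show ?thesis using A that by blast
  next
    case True
    have b0: "b = 0" using sp2 sm2 True by simp
    have a2: "sp * sp = a" using sp2 b0 by simp
    have inv: "PE sp ** PEi sp = mat 1" "PEi sp ** PE sp = mat 1"
      using PE_inv[OF sp0] by simp_all
    have l2: "l = v4 [- sp, - sp, sp, sp]" using True by (simp add: l_def)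
    have e: "Ainf D \<beta> \<delta> \<alpha> lam ** PE sp = PE sp ** diag4 l"
      unfolding AG l2 by (rule PE_eig[OF sp0 a2 b0])
    have "Ainf D \<beta> \<delta> \<alpha> lam = Ainf D \<beta> \<delta> \<alpha> lam ** (PE sp ** PEi sp)" using inv by simp
    also have "\<dots> = PE sp ** diag4 l ** PEi sp" by (simp add: matrix_mul_assoc e)
    finally have A: "Ainf D \<beta> \<delta> \<alpha> lam = PE sp ** diag4 l ** PEi sp" .
    have "Pm D \<beta> \<delta> \<alpha> lam = PE sp"
      using True unfolding Pm_def Let_def sp_def[symmetric] sm_def[symmetric] PE_def by simp
    moreover have "spec4 (PE sp) (PEi sp)" using inv by unfold_locales
    ultimately show ?thesis using A that by blast
  qed
  interpret spec4 P Pi l by (rule PP(1))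
  have A: "Ainf D \<beta> \<delta> \<alpha> lam = cj (diag4 l)" using PP(3) by (simp add: cj_def)
  have mi: "matrix_inv P = Pi" by (rule matrix_inv_eq[OF PPi PiP])
  have cond_eq: "cond (Pm D \<beta> \<delta> \<alpha> lam) = opnorm P * opnorm Pi" by (simp add: cond_def PP(2) mi)
  have cond0: "0 \<le> cond (Pm D \<beta> \<delta> \<alpha> lam)" unfolding cond_eq by (simp add: opnorm_nonneg)
  have kap: "\<kappa> = min (Re sp) (Re sm)" by (simp add: \<kappa>_def kappa1_def sp_def sm_def)
  have kap0: "0 \<le> \<kappa>" using kap sp_pos sm_pos by simp
  have neg: "Re (l$i) < 0 \<longleftrightarrow> i \<in> {1,2}" for i
    using exhaust_4[of i] sp_pos sm_pos by (auto simp: l_def)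
  have pos: "Re (l$i) > 0 \<longleftrightarrow> i \<notin> {1,2}" for i
    using exhaust_4[of i] sp_pos sm_pos by (auto simp: l_def)
  have kI: "Re (l$i) \<le> - \<kappa>" if "i \<in> {1,2}" for i
    using that kap by (auto simp: l_def)
  have kU: "Re (l$i) \<ge> \<kappa>" if "i \<notin> {1,2}" for i
    using that exhaust_4[of i] kap by (auto simp: l_def)
  define Kf where "Kf x y = Kmat D \<beta> \<delta> \<alpha> lam x y (Mm \<epsilon> \<gamma> \<mu> \<nu> (\<psi> x)) (V y) (Mm \<epsilon> \<gamma> \<mu> \<nu> (\<psi> y))" for x y
  have comb: "k \<le> R * w" if "k \<le> r1 * q * r2" "0 \<le> r1" "0 \<le> r2" "0 \<le> q" "r1 * r2 \<le> R" "q \<le> w"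
    for k r1 r2 q R w :: real
  proof -
    have "r1 * q * r2 = (r1 * r2) * q" by (simp add: mult_ac)
    also have "\<dots> \<le> R * w"
    proof -
      have R0: "0 \<le> R" using mult_nonneg_nonneg[OF that(2,3)] that(5) by linarith
      show ?thesis by (rule mult_mono[OF that(5) that(6) R0 that(4)])
    qed
    finally show ?thesis using that(1) by simp
  qed
  have main: "opnorm (Kf x y) \<le> C_R * exp (- a_R * (\<bar>x\<bar> + \<bar>y\<bar>) / 2) * (cond (Pm D \<beta> \<delta> \<alpha> lam) * exp (- \<kappa> * \<bar>x - y\<bar>))" for x y
  proof -
    let ?Rx = "Rr (Mm \<epsilon> \<gamma> \<mu> \<nu> (\<psi> x))" and ?Ry = "Rl D \<beta> (V y) (Mm \<epsilon> \<gamma> \<mu> \<nu> (\<psi> y))"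
    let ?Q = "stable_proj (cj (diag4 l))" and ?E = "mexp ((x - y) *\<^sub>R cj (diag4 l))"
    have RR: "opnorm ?Rx * opnorm ?Ry \<le> C_R * exp (- a_R * (\<bar>x\<bar> + \<bar>y\<bar>) / 2)"
    proof -
      have "opnorm ?Rx * opnorm ?Ry \<le> sqrt (opnorm (Rmat D \<beta> (Mm \<epsilon> \<gamma> \<mu> \<nu> (\<psi> x))) * opnorm (Rmat D \<beta> (Mm \<epsilon> \<gamma> \<mu> \<nu> (\<psi> y))))"
        using RrRl[OF D_beta] polar[of y] by blast
      also have "\<dots> \<le> C_R * exp (- a_R * (\<bar>x\<bar> + \<bar>y\<bar>) / 2)"
        by (rule sqrt_prod_bound[OF opnorm_nonneg opnorm_nonneg Rbound Rbound CR])
      finally show ?thesis .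
    qed
    show ?thesis
    proof (cases "y \<le> x")
      case True
      have K: "Kf x y = - (?Rx ** (?Q ** ?E ** ?Q) ** ?Ry)"
        using True by (simp add: Kf_def Kmat_def Let_def A matrix_mul_assoc)
      have K1: "opnorm (Kf x y) \<le> opnorm ?Rx * opnorm (?Q ** ?E ** ?Q) * opnorm ?Ry"
        unfolding K opnorm_neg by (rule opnorm_mm3)
      have "opnorm (?Q ** ?E ** ?Q) \<le> opnorm P * opnorm Pi * exp (- \<kappa> * (x - y))"
        using stable_bound[OF neg pos kI] True by simp
      then have qb: "opnorm (?Q ** ?E ** ?Q) \<le> cond (Pm D \<beta> \<delta> \<alpha> lam) * exp (- \<kappa> * \<bar>x - y\<bar>)"
        using True by (simp add: cond_eq)
      show ?thesis by (rule comb[OF K1 opnorm_nonneg opnorm_nonneg opnorm_nonneg RR qb])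
    next
      case False
      let ?U = "mat 1 - stable_proj (cj (diag4 l))"
      have K: "Kf x y = ?Rx ** (?U ** ?E ** ?U) ** ?Ry"
        using False by (simp add: Kf_def Kmat_def Let_def A matrix_mul_assoc)
      have K1: "opnorm (Kf x y) \<le> opnorm ?Rx * opnorm (?U ** ?E ** ?U) * opnorm ?Ry"
        unfolding K by (rule opnorm_mm3)
      have "opnorm (?U ** ?E ** ?U) \<le> opnorm P * opnorm Pi * exp (\<kappa> * (x - y))"
        using unstable_bound[OF neg pos kU] False by simp
      moreover have "exp (\<kappa> * (x - y)) = exp (- \<kappa> * \<bar>x - y\<bar>)" using False by (simp add: abs_if algebra_simps)
      ultimately have qb: "opnorm (?U ** ?E ** ?U) \<le> cond (Pm D \<beta> \<delta> \<alpha> lam) * exp (- \<kappa> * \<bar>x - y\<bar>)"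
        by (simp add: cond_eq)
      show ?thesis by (rule comb[OF K1 opnorm_nonneg opnorm_nonneg opnorm_nonneg RR qb])
    qed
  qed
  have s2: "1 \<le> sqrt (2::real)" by simp
  have geq: "c \<le> sqrt 2 * c" if "0 \<le> c" for c :: real
    using mult_right_mono[OF s2 that] by simp
  have B0: "0 \<le> C_R * exp (- a_R * (\<bar>x\<bar> + \<bar>y\<bar>) / 2) * (cond (Pm D \<beta> \<delta> \<alpha> lam) * exp (- \<kappa> * \<bar>x - y\<bar>))" for x y
    using CR cond0 by simp
  show ?thesis
  proof (intro conjI allI impI)
    fix x y :: real assume xy: "y \<le> x"
    have "opnorm (Kf x y) \<le> sqrt 2 * (C_R * exp (- a_R * (\<bar>x\<bar> + \<bar>y\<bar>) / 2) * (cond (Pm D \<beta> \<delta> \<alpha> lam) * exp (- \<kappa> * \<bar>x - y\<bar>)))"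
      using main[of x y] geq[OF B0[of x y]] by linarith
    then show "opnorm (Kmat D \<beta> \<delta> \<alpha> lam x y (Mm \<epsilon> \<gamma> \<mu> \<nu> (\<psi> x)) (V y) (Mm \<epsilon> \<gamma> \<mu> \<nu> (\<psi> y)))
            \<le> sqrt 2 * cond (Pm D \<beta> \<delta> \<alpha> lam) * C_R * exp (- a_R * (\<bar>x\<bar> + \<bar>y\<bar>) / 2)
               * exp (- kappa1 D \<beta> \<delta> \<alpha> lam * (x - y))"
      using xy by (simp add: Kf_def \<kappa>_def mult_ac)
  next
    fix x y :: real assume xy: "x \<le> y"
    have "opnorm (Kf x y) \<le> sqrt 2 * (C_R * exp (- a_R * (\<bar>x\<bar> + \<bar>y\<bar>) / 2) * (cond (Pm D \<beta> \<delta> \<alpha> lam) * exp (- \<kappa> * \<bar>x - y\<bar>)))"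
      using main[of x y] geq[OF B0[of x y]] by linarith
    moreover have "exp (- \<kappa> * \<bar>x - y\<bar>) = exp (\<kappa> * (x - y))" using xy by (simp add: abs_if algebra_simps)
    ultimately show "opnorm (Kmat D \<beta> \<delta> \<alpha> lam x y (Mm \<epsilon> \<gamma> \<mu> \<nu> (\<psi> x)) (V y) (Mm \<epsilon> \<gamma> \<mu> \<nu> (\<psi> y)))
            \<le> sqrt 2 * cond (Pm D \<beta> \<delta> \<alpha> lam) * C_R * exp (- a_R * (\<bar>x\<bar> + \<bar>y\<bar>) / 2)
               * exp (kappa1 D \<beta> \<delta> \<alpha> lam * (x - y))"
      by (simp add: Kf_def \<kappa>_def mult_ac)
  next
    define C where "C = sqrt 2 * cond (Pm D \<beta> \<delta> \<alpha> lam) * C_R"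
    have C0: "0 \<le> C" using cond0 CR by (simp add: C_def)
    have ent: "cmod (Kf x y $ i $ j) \<le> C * exp (- a_R * (\<bar>x\<bar> + \<bar>y\<bar>) / 2) * exp (- \<kappa> * \<bar>x - y\<bar>)" for i j x y
    proof -
      have "cmod (Kf x y $ i $ j) \<le> opnorm (Kf x y)" by (rule entry_le_opnorm)
      also have "\<dots> \<le> sqrt 2 * (C_R * exp (- a_R * (\<bar>x\<bar> + \<bar>y\<bar>) / 2) * (cond (Pm D \<beta> \<delta> \<alpha> lam) * exp (- \<kappa> * \<bar>x - y\<bar>)))"
        using main[of x y] geq[OF B0[of x y]] by linarith
      also have "\<dots> = C * exp (- a_R * (\<bar>x\<bar> + \<bar>y\<bar>) / 2) * exp (- \<kappa> * \<bar>x - y\<bar>)"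
        by (simp add: C_def mult_ac)
      finally show ?thesis .
    qed
    have e1: "exp (- a_R * (\<bar>x\<bar> + \<bar>y\<bar>) / 2) \<le> 1" for x y
      using aR by simp
    have e2: "exp (- \<kappa> * \<bar>x - y\<bar>) \<le> 1" for x y
      using kap0 by simp
    show "\<exists>C. \<forall>i j x y.
            cmod (Kmat D \<beta> \<delta> \<alpha> lam x y (Mm \<epsilon> \<gamma> \<mu> \<nu> (\<psi> x)) (V y) (Mm \<epsilon> \<gamma> \<mu> \<nu> (\<psi> y)) $ i $ j)
              \<le> C * exp (- a_R * (\<bar>x\<bar> + \<bar>y\<bar>) / 2)
          \<and> cmod (Kmat D \<beta> \<delta> \<alpha> lam x y (Mm \<epsilon> \<gamma> \<mu> \<nu> (\<psi> x)) (V y) (Mm \<epsilon> \<gamma> \<mu> \<nu> (\<psi> y)) $ i $ j)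
              \<le> C * exp (- kappa1 D \<beta> \<delta> \<alpha> lam * \<bar>x - y\<bar>)"
    proof (intro exI allI conjI)
      fix i j x y
      have p1: "0 \<le> C * exp (- a_R * (\<bar>x\<bar> + \<bar>y\<bar>) / 2)" using C0 by simp
      have p2: "0 \<le> C * exp (- \<kappa> * \<bar>x - y\<bar>)" using C0 by simp
      have "C * exp (- a_R * (\<bar>x\<bar> + \<bar>y\<bar>) / 2) * exp (- \<kappa> * \<bar>x - y\<bar>) \<le> C * exp (- a_R * (\<bar>x\<bar> + \<bar>y\<bar>) / 2)"
        using mult_left_mono[OF e2 p1] by simp
      then show "cmod (Kmat D \<beta> \<delta> \<alpha> lam x y (Mm \<epsilon> \<gamma> \<mu> \<nu> (\<psi> x)) (V y) (Mm \<epsilon> \<gamma> \<mu> \<nu> (\<psi> y)) $ i $ j)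
              \<le> C * exp (- a_R * (\<bar>x\<bar> + \<bar>y\<bar>) / 2)"
        using ent[of x y i j] unfolding Kf_def by linarith
      have "C * exp (- a_R * (\<bar>x\<bar> + \<bar>y\<bar>) / 2) * exp (- \<kappa> * \<bar>x - y\<bar>) \<le> C * exp (- \<kappa> * \<bar>x - y\<bar>)"
        using mult_left_mono[OF e1 p2] by (simp add: mult_ac)
      then show "cmod (Kmat D \<beta> \<delta> \<alpha> lam x y (Mm \<epsilon> \<gamma> \<mu> \<nu> (\<psi> x)) (V y) (Mm \<epsilon> \<gamma> \<mu> \<nu> (\<psi> y)) $ i $ j)
              \<le> C * exp (- kappa1 D \<beta> \<delta> \<alpha> lam * \<bar>x - y\<bar>)"
        using ent[of x y i j] unfolding Kf_def \<kappa>_def by linarith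
    qed
  qed
qed

end
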